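(* For each maximal cone $\sigma$ of $\Sigma$ there exists $c_\sigma\in\mathcal C_\sigma^\vee$ such that the series $\sum_{l\in\mathbb L\cap\mathcal C_\sigma}\prod_{j=1}^n\frac{z_j^{l_j+\lambda_j}}{\Gamma(l_j+\lambda_j+1)}$ is absolutely convergent for $(z,\lambda)\in U_\sigma\times\mathbb C^n$ and defines an analytic function on $U_\sigma\times\mathbb C^n$, where $U_\sigma=\{z\in\mathbb C^n:(-\log|z_1|,\dots,-\log|z_n|)\in\mathcal C_\sigma^\vee+c_\sigma,\ (\arg z_1,\dots,\arg z_n)\in(-\pi,\pi)^n\}$ and $z_j^{\lambda_j}=e^{\lambda_j(\log|z_j|+i\arg z_j)}$.
   Context: $N\cong\mathbb Z^d$ lattice, $\mathcal A=\{v_1,\dots,v_n\}\subset N$ generating $N$ with a homomorphism $\mathrm h:N\to\mathbb Z$, $\mathrm h(v_j)=1$ for all $j$; $\mathbb L=\{l\in\mathbb Z^n:\sum l_jv_j=0\}$; $\Sigma$ the simplicial fan supported on $\mathbb R_{\ge0}\mathrm{Conv}(\mathcal A)$ from a regular triangulation of $\mathrm{Conv}(\mathcal A)$ with vertices in $\mathcal A$. For a maximal cone $\sigma$, $\mathcal C_\sigma=\{x\in\mathbb L\otimes\mathbb R\subset\mathbb R^n:x_j\ge0$ whenever $\mathbb R_{\ge0}v_j$ is not a ray of $\sigma\}$ and $\mathcal C_\sigma^\vee=\{u\in\mathbb R^n:\langle u,x\rangle\ge0\ \forall x\in\mathcal C_\sigma\}$. *)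

theory Defs
  imports "HOL-Analysis.Analysis"
begin

(* N = Z^d is modelled as  'd \<Rightarrow> int  with 'd a finite index type (d = CARD('d)).
   The configuration A = {v_1,...,v_n} is a family  v :: 'n \<Rightarrow> ('d \<Rightarrow> int),  'n finite
   (n = CARD('n)). *)

definition generates_lattice :: "('n::finite \<Rightarrow> 'd::finite \<Rightarrow> int) \<Rightarrow> bool" where
  "generates_lattice v \<longleftrightarrow>
     (\<forall>x :: 'd \<Rightarrow> int. \<exists>c :: 'n \<Rightarrow> int. x = (\<lambda>i. \<Sum>j\<in>UNIV. c j * v j i))"

definition has_height_one :: "('n::finite \<Rightarrow> 'd::finite \<Rightarrow> int) \<Rightarrow> bool" where
  "has_height_one v \<longleftrightarrow> (\<exists>h :: 'd \<Rightarrow> int. \<forall>j. (\<Sum>i\<in>UNIV. h i * v j i) = 1)"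

definition Lat :: "('n::finite \<Rightarrow> 'd::finite \<Rightarrow> int) \<Rightarrow> ('n \<Rightarrow> int) set" where
  "Lat v = {l. \<forall>i. (\<Sum>j\<in>UNIV. l j * v j i) = 0}"

(* L \<otimes> R, viewed inside R^n: the real span of L *)
definition LatR :: "('n::finite \<Rightarrow> 'd::finite \<Rightarrow> int) \<Rightarrow> ('n \<Rightarrow> real) set" where
  "LatR v = {x. \<exists>F c. finite F \<and> F \<subseteq> Lat v \<and>
                    x = (\<lambda>j. \<Sum>l\<in>F. c l * real_of_int (l j))}"

(* Regular subdivision of Conv(A) induced by a height function \<omega> : A \<rightarrow> R.
   Since h(v_j) = 1, affine functions on the hyperplane h = 1 are restrictions of linear
   functionals \<psi> on R^d.  The cells of the subdivision are the index sets
   {j. \<psi>(v_j) = \<omega>_j} for \<psi> with \<psi>(v_j) \<le> \<omega>_j for all j (lower faces of the lifted polytope)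
   that are nonempty. *)
definition lower_functional :: "('n::finite \<Rightarrow> 'd::finite \<Rightarrow> int) \<Rightarrow> ('n \<Rightarrow> real) \<Rightarrow> ('d \<Rightarrow> real) \<Rightarrow> bool" where
  "lower_functional v \<omega> \<psi> \<longleftrightarrow> (\<forall>j. (\<Sum>i\<in>UNIV. \<psi> i * real_of_int (v j i)) \<le> \<omega> j)"

definition cell :: "('n::finite \<Rightarrow> 'd::finite \<Rightarrow> int) \<Rightarrow> ('n \<Rightarrow> real) \<Rightarrow> 'n set \<Rightarrow> bool" where
  "cell v \<omega> I \<longleftrightarrow> I \<noteq> {} \<and> (\<exists>\<psi>. lower_functional v \<omega> \<psi> \<and>
       I = {j. (\<Sum>i\<in>UNIV. \<psi> i * real_of_int (v j i)) = \<omega> j})"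

definition lin_indep_on :: "('n::finite \<Rightarrow> 'd::finite \<Rightarrow> int) \<Rightarrow> 'n set \<Rightarrow> bool" where
  "lin_indep_on v J \<longleftrightarrow> (\<forall>c :: 'n \<Rightarrow> real. (\<forall>j. j \<notin> J \<longrightarrow> c j = 0) \<and>
       (\<forall>i. (\<Sum>j\<in>UNIV. c j * real_of_int (v j i)) = 0) \<longrightarrow> (\<forall>j. c j = 0))"

(* \<omega> induces a (regular) triangulation with vertices in A: every cell is a simplex,
   i.e. its points are affinely (equivalently, since h = 1 on A, linearly) independent *)
definition regular_triangulation :: "('n::finite \<Rightarrow> 'd::finite \<Rightarrow> int) \<Rightarrow> ('n \<Rightarrow> real) \<Rightarrow> bool" where
  "regular_triangulation v \<omega> \<longleftrightarrow> (\<forall>I. cell v \<omega> I \<longrightarrow> lin_indep_on v I)"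

(* maximal cones of the fan \<Sigma> = cones R_{\<ge>0} Conv{v_j : j \<in> I} over maximal cells I;
   the rays of such a cone are exactly R_{\<ge>0} v_j, j \<in> I *)
definition maximal_cell :: "('n::finite \<Rightarrow> 'd::finite \<Rightarrow> int) \<Rightarrow> ('n \<Rightarrow> real) \<Rightarrow> 'n set \<Rightarrow> bool" where
  "maximal_cell v \<omega> I \<longleftrightarrow> cell v \<omega> I \<and> (\<forall>J. cell v \<omega> J \<and> I \<subseteq> J \<longrightarrow> J = I)"

definition Ccone :: "('n::finite \<Rightarrow> 'd::finite \<Rightarrow> int) \<Rightarrow> 'n set \<Rightarrow> ('n \<Rightarrow> real) set" where
  "Ccone v I = {x \<in> LatR v. \<forall>j. j \<notin> I \<longrightarrow> x j \<ge> 0}"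

definition dual_cone :: "('n::finite \<Rightarrow> real) set \<Rightarrow> ('n \<Rightarrow> real) set" where
  "dual_cone C = {u. \<forall>x\<in>C. (\<Sum>j\<in>UNIV. u j * x j) \<ge> 0}"

definition zpow :: "complex \<Rightarrow> complex \<Rightarrow> complex" where
  "zpow z \<mu> = exp (\<mu> * (complex_of_real (ln (cmod z)) + \<i> * complex_of_real (Arg z)))"

definition Uset :: "('n::finite \<Rightarrow> 'd::finite \<Rightarrow> int) \<Rightarrow> 'n set \<Rightarrow> ('n \<Rightarrow> real) \<Rightarrow> ('n \<Rightarrow> complex) set" where
  "Uset v I c = {z. (\<forall>j. z j \<noteq> 0) \<and>
      (\<exists>u\<in>dual_cone (Ccone v I). (\<lambda>j. - ln (cmod (z j))) = (\<lambda>j. u j + c j)) \<and>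
      (\<forall>j. - pi < Arg (z j) \<and> Arg (z j) < pi)}"

definition series_term :: "('n::finite \<Rightarrow> complex) \<Rightarrow> ('n \<Rightarrow> complex) \<Rightarrow> ('n \<Rightarrow> int) \<Rightarrow> complex" where
  "series_term z lam l = (\<Prod>j\<in>UNIV. zpow (z j) (of_int (l j) + lam j) / Gamma (of_int (l j) + lam j + 1))"

(* Analyticity of a function of (z, \<lambda>) \<in> C^n \<times> C^n on a set S: around every point of S
   it is given on a polydisc by an (absolutely) convergent power series
   (as for the library's analytic_on, analyticity on S means on a neighbourhood of each point) *)
definition analytic2_on :: "(('n::finite \<Rightarrow> complex) \<times> ('n \<Rightarrow> complex)) set \<Rightarrow>
                            (('n \<Rightarrow> complex) \<Rightarrow> ('n \<Rightarrow> complex) \<Rightarrow> complex) \<Rightarrow> bool" where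
  "analytic2_on S f \<longleftrightarrow> (\<forall>(z0, lam0)\<in>S. \<exists>r>0. \<exists>a :: ('n \<Rightarrow> nat) \<Rightarrow> ('n \<Rightarrow> nat) \<Rightarrow> complex.
      \<forall>z lam. (\<forall>j. cmod (z j - z0 j) < r \<and> cmod (lam j - lam0 j) < r) \<longrightarrow>
        ((\<lambda>(\<alpha>, \<beta>). a \<alpha> \<beta> * (\<Prod>j\<in>UNIV. (z j - z0 j) ^ \<alpha> j) * (\<Prod>j\<in>UNIV. (lam j - lam0 j) ^ \<beta> j))
           has_sum f z lam) UNIV)"

end

theory Submission
  imports Defs "HOL-Complex_Analysis.Complex_Analysis"
begin


definition mnm :: "('n::finite \<Rightarrow> nat) \<times> ('n \<Rightarrow> nat) \<Rightarrow> ('n \<Rightarrow> complex) \<Rightarrow> ('n \<Rightarrow> complex) \<Rightarrow> complex" where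
  "mnm e w u = (\<Prod>j\<in>UNIV. w j ^ fst e j) * (\<Prod>j\<in>UNIV. u j ^ snd e j)"

definition deg :: "('n::finite \<Rightarrow> nat) \<times> ('n \<Rightarrow> nat) \<Rightarrow> nat" where
  "deg e = (\<Sum>j\<in>UNIV. fst e j) + (\<Sum>j\<in>UNIV. snd e j)"

definition eadd :: "('n::finite \<Rightarrow> nat) \<times> ('n \<Rightarrow> nat) \<Rightarrow> ('n \<Rightarrow> nat) \<times> ('n \<Rightarrow> nat) \<Rightarrow> ('n \<Rightarrow> nat) \<times> ('n \<Rightarrow> nat)" where
  "eadd a b = ((\<lambda>j. fst a j + fst b j), (\<lambda>j. snd a j + snd b j))"

definition inpd :: "real \<Rightarrow> ('n::finite \<Rightarrow> complex) \<Rightarrow> ('n \<Rightarrow> complex) \<Rightarrow> bool" where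
  "inpd r w u \<longleftrightarrow> (\<forall>j. norm (w j) < r \<and> norm (u j) < r)"

definition hasrep :: "real \<Rightarrow> (('n::finite \<Rightarrow> complex) \<Rightarrow> ('n \<Rightarrow> complex) \<Rightarrow> complex) \<Rightarrow> real \<Rightarrow> bool" where
  "hasrep r F M \<longleftrightarrow> (\<exists>(K::nat set) c e m. ((\<lambda>k. norm (c k) * r ^ deg (e k)) has_sum m) K \<and> m \<le> M \<and>
      (\<forall>w u. inpd r w u \<longrightarrow> ((\<lambda>k. c k * mnm (e k) w u) has_sum F w u) K))"

lemma hasrepE:
  fixes F :: "('n::finite \<Rightarrow> complex) \<Rightarrow> ('n \<Rightarrow> complex) \<Rightarrow> complex"
  assumes "hasrep r F M"
  obtains K :: "nat set" and c :: "nat \<Rightarrow> complex" and e :: "nat \<Rightarrow> ('n \<Rightarrow> nat) \<times> ('n \<Rightarrow> nat)" and m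
  where "((\<lambda>k. norm (c k) * r ^ deg (e k)) has_sum m) K" "m \<le> M"
      "\<And>w u. inpd r w u \<Longrightarrow> ((\<lambda>k. c k * mnm (e k) w u) has_sum F w u) K"
  using assms unfolding hasrep_def by blast

lemma mnm_eadd: "mnm (eadd a b) w u = mnm a w u * mnm b w u"
  by (simp add: mnm_def eadd_def power_add prod.distrib)

lemma deg_eadd: "deg (eadd a b) = deg a + deg b"
  by (simp add: deg_def eadd_def sum.distrib)

lemma norm_mnm_le:
  assumes "inpd r w u" "0 \<le> r"
  shows "norm (mnm e w u) \<le> r ^ deg e"
proof -
  have 1: "norm (\<Prod>j\<in>UNIV. w j ^ fst e j) \<le> (\<Prod>j\<in>UNIV. r ^ fst e j)"
    unfolding prod_norm[symmetric] norm_power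
    by (intro prod_mono conjI power_mono) (use assms in \<open>auto simp: inpd_def less_imp_le\<close>)
  have 2: "norm (\<Prod>j\<in>UNIV. u j ^ snd e j) \<le> (\<Prod>j\<in>UNIV. r ^ snd e j)"
    unfolding prod_norm[symmetric] norm_power
    by (intro prod_mono conjI power_mono) (use assms in \<open>auto simp: inpd_def less_imp_le\<close>)
  have "norm (mnm e w u) \<le> (\<Prod>j\<in>UNIV. r ^ fst e j) * (\<Prod>j\<in>UNIV. r ^ snd e j)"
    unfolding mnm_def norm_mult by (intro mult_mono 1 2) (auto intro: prod_nonneg simp: assms)
  also have "\<dots> = r ^ deg e" by (simp add: deg_def power_add power_sum)
  finally show ?thesis .
qed

lemma hasrepI:
  fixes K :: "'k::countable set"
  assumes "((\<lambda>k. norm (c k) * r ^ deg (e k)) has_sum m) K" "m \<le> M"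
    "\<And>w u. inpd r w u \<Longrightarrow> ((\<lambda>k. c k * mnm (e k) w u) has_sum F w u) K"
  shows "hasrep r F M"
proof -
  have inj: "inj_on to_nat K" by (simp add: inj_on_def)
  define c' where "c' = c \<circ> from_nat"
  define e' where "e' = e \<circ> from_nat"
  have A: "((\<lambda>k. norm (c' k) * r ^ deg (e' k)) has_sum m) (to_nat ` K)"
    unfolding has_sum_reindex[OF inj] using assms(1) by (simp add: c'_def e'_def o_def)
  have B: "((\<lambda>k. c' k * mnm (e' k) w u) has_sum F w u) (to_nat ` K)" if "inpd r w u" for w u
    unfolding has_sum_reindex[OF inj] using assms(3)[OF that] by (simp add: c'_def e'_def o_def)
  show ?thesis unfolding hasrep_def using A B assms(2) by blast
qed

lemma hasrep_nonneg: fixes F :: "('n::finite \<Rightarrow> complex) \<Rightarrow> ('n \<Rightarrow> complex) \<Rightarrow> complex" assumes "hasrep r F M" "0 \<le> r" shows "0 \<le> M"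
proof -
  obtain c :: "nat \<Rightarrow> complex" and e K m where 1: "((\<lambda>k. norm (c k) * r ^ deg (e k)) has_sum m) K" "m \<le> M"
      "\<And>w u. inpd r w u \<Longrightarrow> ((\<lambda>k. c k * mnm (e k) w u) has_sum F w u) K"
    by (rule hasrepE[OF assms(1)]) blast
  have "0 \<le> m" by (rule has_sum_nonneg[OF 1(1)]) (simp add: assms)
  with 1 show ?thesis by simp
qed

lemma hasrep_bound:
  fixes F :: "('n::finite \<Rightarrow> complex) \<Rightarrow> ('n \<Rightarrow> complex) \<Rightarrow> complex"
  assumes "hasrep r F M" "inpd r w u" "0 \<le> r"
  shows "norm (F w u) \<le> M"
proof -
  obtain c :: "nat \<Rightarrow> complex" and e K m where 1: "((\<lambda>k. norm (c k) * r ^ deg (e k)) has_sum m) K" "m \<le> M"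
      "\<And>w u. inpd r w u \<Longrightarrow> ((\<lambda>k. c k * mnm (e k) w u) has_sum F w u) K"
    by (rule hasrepE[OF assms(1)]) blast
  have "norm (F w u) \<le> m"
    by (rule norm_infsum_le[OF 1(3)[OF assms(2)] 1(1)])
       (auto simp: norm_mult intro!: mult_left_mono norm_mnm_le assms)
  with 1 show ?thesis by simp
qed

lemma hasrep_mono: "hasrep r F M \<Longrightarrow> M \<le> M' \<Longrightarrow> hasrep r F M'"
  unfolding hasrep_def by (meson order.trans)

lemma hasrep_cong:
  fixes F :: "('n::finite \<Rightarrow> complex) \<Rightarrow> ('n \<Rightarrow> complex) \<Rightarrow> complex"
  assumes "hasrep r F M" "\<And>w u. inpd r w u \<Longrightarrow> F w u = G w u"
  shows "hasrep r G M"
proof -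
  obtain c :: "nat \<Rightarrow> complex" and e K m where 1: "((\<lambda>k. norm (c k) * r ^ deg (e k)) has_sum m) K" "m \<le> M"
      "\<And>w u. inpd r w u \<Longrightarrow> ((\<lambda>k. c k * mnm (e k) w u) has_sum F w u) K"
    by (rule hasrepE[OF assms(1)]) blast
  show ?thesis
  proof (rule hasrepI[OF 1(1) 1(2)])
    fix w u :: "'n \<Rightarrow> complex" assume a: "inpd r w u"
    show "((\<lambda>k. c k * mnm (e k) w u) has_sum G w u) K" using 1(3)[OF a] assms(2)[OF a] by simp
  qed
qed

lemma hasrep_const: "hasrep r (\<lambda>w u. a) (norm a)"
proof -
  have "((\<lambda>k::nat. norm a * r ^ deg ((\<lambda>j. 0::nat), (\<lambda>j. 0::nat))) has_sum norm a) {0}"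
    by (subst has_sum_finite_iff) (auto simp: deg_def)
  moreover have "((\<lambda>k::nat. a * mnm ((\<lambda>j. 0::nat), (\<lambda>j. 0::nat)) w u) has_sum a) {0}" for w u
    by (subst has_sum_finite_iff) (auto simp: mnm_def)
  ultimately show ?thesis by (intro hasrepI[where K="{0::nat}" and c="\<lambda>_. a" and e="\<lambda>_. ((\<lambda>j. 0), (\<lambda>j. 0))" and m="norm a"]) simp_all
qed

lemma hasrep_mnm_mult:
  fixes F :: "('n::finite \<Rightarrow> complex) \<Rightarrow> ('n \<Rightarrow> complex) \<Rightarrow> complex"
  assumes "hasrep r F M" "0 \<le> r"
  shows "hasrep r (\<lambda>w u. a * mnm e0 w u * F w u) (norm a * r ^ deg e0 * M)"
proof -
  obtain c :: "nat \<Rightarrow> complex" and e K m where 1: "((\<lambda>k. norm (c k) * r ^ deg (e k)) has_sum m) K" "m \<le> M"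
      "\<And>w u. inpd r w u \<Longrightarrow> ((\<lambda>k. c k * mnm (e k) w u) has_sum F w u) K"
    by (rule hasrepE[OF assms(1)]) blast
  have A: "((\<lambda>k. norm (a * c k) * r ^ deg (eadd e0 (e k))) has_sum (norm a * r ^ deg e0 * m)) K"
    using has_sum_cmult_right[OF 1(1), of "norm a * r ^ deg e0"]
    by (simp add: deg_eadd power_add norm_mult mult_ac)
  have B: "((\<lambda>k. (a * c k) * mnm (eadd e0 (e k)) w u) has_sum (a * mnm e0 w u * F w u)) K"
    if "inpd r w u" for w u
    using has_sum_cmult_right[OF 1(3)[OF that], of "a * mnm e0 w u"]
    by (simp add: mnm_eadd mult_ac)
  show ?thesis
    by (rule hasrepI[OF A _ B]) (use 1(2) in \<open>auto intro!: mult_left_mono simp: assms\<close>)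
qed



lemma hasrep_sum:
  fixes F :: "'l::countable \<Rightarrow> ('n::finite \<Rightarrow> complex) \<Rightarrow> ('n \<Rightarrow> complex) \<Rightarrow> complex"
    and L :: "'l set"
  assumes r: "0 \<le> r" and H: "\<And>l. l \<in> L \<Longrightarrow> hasrep r (F l) (M l)" and Ms: "M summable_on L"
  shows "hasrep r (\<lambda>w u. \<Sum>\<^sub>\<infinity>l\<in>L. F l w u) (\<Sum>\<^sub>\<infinity>l\<in>L. M l)"
    and "\<And>w u. inpd r w u \<Longrightarrow> ((\<lambda>l. F l w u) has_sum (\<Sum>\<^sub>\<infinity>l\<in>L. F l w u)) L"
proof -
  define P where "P l K c e m \<longleftrightarrow> ((\<lambda>k. norm (c k) * r ^ deg (e k)) has_sum m) K \<and> m \<le> M l \<and>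
      (\<forall>w u. inpd r w u \<longrightarrow> ((\<lambda>k. c k * mnm (e k) w u) has_sum F l w u) K)"
    for l and K :: "nat set" and c :: "nat \<Rightarrow> complex" and e :: "nat \<Rightarrow> ('n \<Rightarrow> nat) \<times> ('n \<Rightarrow> nat)" and m :: real
  have h0: "\<forall>l\<in>L. \<exists>K c e m. P l K c e m"
    using H unfolding hasrep_def P_def by blast
  obtain KK where h1: "\<forall>l\<in>L. \<exists>c e m. P l (KK l) c e m"
    using bchoice[OF h0] by blast
  obtain cc where h2: "\<forall>l\<in>L. \<exists>e m. P l (KK l) (cc l) e m"
    using bchoice[OF h1] by blast
  obtain ee where h3: "\<forall>l\<in>L. \<exists>m. P l (KK l) (cc l) (ee l) m"
    using bchoice[OF h2] by blast
  obtain mm where PP: "\<forall>l\<in>L. P l (KK l) (cc l) (ee l) (mm l)"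
    using bchoice[OF h3] by blast
  define S where "S = Sigma L KK"
  define g where "g p = norm (cc (fst p) (snd p)) * r ^ deg (ee (fst p) (snd p))" for p
  have inner: "((\<lambda>k. g (l, k)) has_sum mm l) (KK l)" if "l \<in> L" for l
    using PP that unfolding P_def g_def by auto
  have mm_nonneg: "0 \<le> mm l" if "l \<in> L" for l
    by (rule has_sum_nonneg[OF inner[OF that]]) (auto simp: g_def r)
  have mm_le: "mm l \<le> M l" if "l \<in> L" for l
    using PP that unfolding P_def by auto
  have mms: "mm summable_on L"
    by (rule summable_on_comparison_test[OF Ms]) (use mm_nonneg mm_le in auto)
  have gs: "g summable_on S"
    unfolding S_def
    by (rule summable_on_SigmaI[where g = mm]) (use inner mms in \<open>auto simp: g_def r\<close>)
  have "(mm has_sum infsum g S) L"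
    by (rule has_sum_Sigma'[OF _ inner]) (use gs in \<open>auto simp: S_def\<close>)
  hence tot: "infsum g S = infsum mm L" by (simp add: infsumI)
  have totle: "infsum mm L \<le> infsum M L"
    by (rule infsum_mono[OF mms Ms mm_le])
  define f where "f w u p = cc (fst p) (snd p) * mnm (ee (fst p) (snd p)) w u" for w u p
  have fhas: "(f w u has_sum infsum (f w u) S) S" if "inpd r w u" for w u
  proof -
    have "(\<lambda>p. norm (f w u p)) summable_on S"
      by (rule summable_on_comparison_test[OF gs])
         (auto simp: f_def g_def norm_mult intro!: mult_left_mono norm_mnm_le that r)
    hence "f w u summable_on S" by (rule abs_summable_summable)
    thus ?thesis by (rule has_sum_infsum)
  qed
  have innerF: "((\<lambda>k. f w u (l, k)) has_sum F l w u) (KK l)" if "l \<in> L" "inpd r w u" for l w u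
    using PP that unfolding P_def f_def by auto
  have Fhas: "((\<lambda>l. F l w u) has_sum infsum (f w u) S) L" if "inpd r w u" for w u
    by (rule has_sum_Sigma'[OF _ innerF]) (use fhas[OF that] that in \<open>auto simp: S_def\<close>)
  show "((\<lambda>l. F l w u) has_sum (\<Sum>\<^sub>\<infinity>l\<in>L. F l w u)) L" if "inpd r w u" for w u
    using Fhas[OF that] by (simp add: infsumI)
  show "hasrep r (\<lambda>w u. \<Sum>\<^sub>\<infinity>l\<in>L. F l w u) (\<Sum>\<^sub>\<infinity>l\<in>L. M l)"
  proof (rule hasrepI[where K = S and c = "\<lambda>p. cc (fst p) (snd p)" and e = "\<lambda>p. ee (fst p) (snd p)" and m = "infsum g S"])
    show "((\<lambda>k. norm (cc (fst k) (snd k)) * r ^ deg (ee (fst k) (snd k))) has_sum infsum g S) S"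
      using has_sum_infsum[OF gs] by (simp add: g_def[abs_def])
    show "infsum g S \<le> infsum M L" using tot totle by simp
    show "((\<lambda>k. cc (fst k) (snd k) * mnm (ee (fst k) (snd k)) w u) has_sum (\<Sum>\<^sub>\<infinity>l\<in>L. F l w u)) S"
      if "inpd r w u" for w u
    proof -
      have e1: "(\<Sum>\<^sub>\<infinity>l\<in>L. F l w u) = infsum (f w u) S" by (rule infsumI[OF Fhas[OF that]])
      have e2: "f w u = (\<lambda>k. cc (fst k) (snd k) * mnm (ee (fst k) (snd k)) w u)" by (simp add: f_def[abs_def])
      show ?thesis using fhas[OF that] unfolding e1 e2 .
    qed
  qed
qed

lemma hasrep_mult:
  fixes F G :: "('n::finite \<Rightarrow> complex) \<Rightarrow> ('n \<Rightarrow> complex) \<Rightarrow> complex"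
  assumes "hasrep r F M1" "hasrep r G M2" "0 \<le> r"
  shows "hasrep r (\<lambda>w u. F w u * G w u) (M1 * M2)"
proof -
  obtain c :: "nat \<Rightarrow> complex" and e K m where 1: "((\<lambda>k. norm (c k) * r ^ deg (e k)) has_sum m) K" "m \<le> M1"
      "\<And>w u. inpd r w u \<Longrightarrow> ((\<lambda>k. c k * mnm (e k) w u) has_sum F w u) K"
    by (rule hasrepE[OF assms(1)]) blast
  have M2: "0 \<le> M2" by (rule hasrep_nonneg[OF assms(2,3)])
  have H: "hasrep r (\<lambda>w u. c k * mnm (e k) w u * G w u) (norm (c k) * r ^ deg (e k) * M2)" for k
    by (rule hasrep_mnm_mult[OF assms(2,3)])
  have Ms: "(\<lambda>k. norm (c k) * r ^ deg (e k) * M2) summable_on K"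
    using 1(1) by (intro summable_on_cmult_left) (auto simp: summable_on_def)
  have R: "hasrep r (\<lambda>w u. \<Sum>\<^sub>\<infinity>k\<in>K. c k * mnm (e k) w u * G w u) (\<Sum>\<^sub>\<infinity>k\<in>K. norm (c k) * r ^ deg (e k) * M2)"
    by (rule hasrep_sum(1)[OF assms(3) H Ms])
  have "(\<Sum>\<^sub>\<infinity>k\<in>K. norm (c k) * r ^ deg (e k) * M2) = m * M2"
    using infsumI[OF 1(1)] by (simp add: infsum_cmult_left')
  also have "\<dots> \<le> M1 * M2" using 1(2) M2 by (simp add: mult_right_mono)
  finally have le: "(\<Sum>\<^sub>\<infinity>k\<in>K. norm (c k) * r ^ deg (e k) * M2) \<le> M1 * M2" .
  show ?thesis
  proof (rule hasrep_mono[OF hasrep_cong[OF R] le])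
    fix w u :: "'n \<Rightarrow> complex" assume "inpd r w u"
    have "((\<lambda>k. c k * mnm (e k) w u * G w u) has_sum (F w u * G w u)) K"
      using has_sum_cmult_left[OF 1(3)[OF \<open>inpd r w u\<close>]] by simp
    thus "(\<Sum>\<^sub>\<infinity>k\<in>K. c k * mnm (e k) w u * G w u) = F w u * G w u" by (simp add: infsumI)
  qed
qed

lemma hasrep_prod:
  fixes F :: "'j \<Rightarrow> ('n::finite \<Rightarrow> complex) \<Rightarrow> ('n \<Rightarrow> complex) \<Rightarrow> complex"
  assumes "finite J" "\<And>j. j \<in> J \<Longrightarrow> hasrep r (F j) (M j)" "0 \<le> r"
  shows "hasrep r (\<lambda>w u. \<Prod>j\<in>J. F j w u) (\<Prod>j\<in>J. M j)"
  using assms(1,2)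
proof (induction J rule: finite_induct)
  case empty
  then show ?case using hasrep_const[of r "1::complex"] by simp
next
  case (insert x J)
  have "hasrep r (\<lambda>w u. F x w u * (\<Prod>j\<in>J. F j w u)) (M x * (\<Prod>j\<in>J. M j))"
    by (rule hasrep_mult) (use insert assms(3) in auto)
  thus ?case using insert by simp
qed



lemma hasrep_hol_gen:
  fixes f :: "complex \<Rightarrow> complex" and ex :: "nat \<Rightarrow> ('n::finite \<Rightarrow> nat) \<times> ('n \<Rightarrow> nat)"
    and V :: "('n \<Rightarrow> complex) \<Rightarrow> ('n \<Rightarrow> complex) \<Rightarrow> complex"
  assumes hol: "f holomorphic_on ball 0 R" and bnd: "\<And>x. x \<in> ball 0 R \<Longrightarrow> norm (f x) \<le> B"
    and r: "0 < r" "2 * r < R"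
    and ex: "\<And>i w u. mnm (ex i) w u = V w u ^ i" "\<And>i. deg (ex i) = i"
    and V: "\<And>w u. inpd r w u \<Longrightarrow> norm (V w u) < r"
  shows "hasrep r (\<lambda>w u. f (V w u)) (2 * B)"
proof -
  define c where "c i = (deriv ^^ i) f 0 / fact i" for i
  have B0: "0 \<le> B" using bnd[of 0] r by (auto intro: order.trans[OF norm_ge_zero])
  have ci: "norm (c i) * r ^ i \<le> B * (1/2) ^ i" for i
  proof -
    have "norm ((deriv ^^ i) f 0) \<le> fact i * B / (2 * r) ^ i"
    proof (rule Cauchy_inequality)
      show "f holomorphic_on ball 0 (2 * r)" by (rule holomorphic_on_subset[OF hol]) (use r in auto)
      show "continuous_on (cball 0 (2 * r)) f"
        by (rule holomorphic_on_imp_continuous_on, rule holomorphic_on_subset[OF hol]) (use r in auto)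
      show "norm (0 - x) = 2 * r \<Longrightarrow> norm (f x) \<le> B" for x
        by (rule bnd) (use r in auto)
    qed (use r in auto)
    hence "norm (c i) \<le> B / (2 * r) ^ i"
      by (simp add: c_def norm_divide field_simps)
    hence "norm (c i) * r ^ i \<le> B / (2 * r) ^ i * r ^ i"
      by (rule mult_right_mono) (use r in auto)
    also have "\<dots> = B * (1/2) ^ i" using r by (simp add: power_mult_distrib field_simps)
    finally show ?thesis .
  qed
  have geo: "(\<lambda>i. B * (1/2::real) ^ i) sums (B * 2)"
    using sums_mult[OF geometric_sums[of "1/2::real"], of B] by simp
  have sm: "summable (\<lambda>i. norm (c i) * r ^ i)"
    by (rule summable_comparison_test'[OF sums_summable[OF geo], of 0]) (use ci r in auto)
  have hs: "((\<lambda>i. norm (c i) * r ^ i) has_sum (\<Sum>i. norm (c i) * r ^ i)) UNIV"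
    by (rule sums_nonneg_imp_has_sum[OF summable_sums[OF sm]]) (use r in auto)
  have le: "(\<Sum>i. norm (c i) * r ^ i) \<le> 2 * B"
    using suminf_le[OF ci sm sums_summable[OF geo]] sums_unique[OF geo] by simp
  show ?thesis
  proof (rule hasrepI[where K = "UNIV :: nat set" and c = c and e = ex])
    show "((\<lambda>k. norm (c k) * r ^ deg (ex k)) has_sum (\<Sum>i. norm (c i) * r ^ i)) UNIV"
      using hs by (simp add: ex(2))
    show "(\<Sum>i. norm (c i) * r ^ i) \<le> 2 * B" by (rule le)
    fix w u :: "'n \<Rightarrow> complex" assume wu: "inpd r w u"
    have Vb: "V w u \<in> ball 0 R" using V[OF wu] r by auto
    have s1: "(\<lambda>n. c n * (V w u) ^ n) sums f (V w u)"
      using holomorphic_power_series[OF hol Vb] by (simp add: c_def)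
    have s2: "summable (\<lambda>n. norm (c n * (V w u) ^ n))"
    proof (rule summable_comparison_test'[OF sm, of 0])
      fix n :: nat
      have "norm (V w u) ^ n \<le> r ^ n" by (rule power_mono) (use V[OF wu] in auto)
      thus "norm (norm (c n * V w u ^ n)) \<le> norm (c n) * r ^ n"
        by (simp add: norm_mult norm_power mult_left_mono)
    qed
    show "((\<lambda>k. c k * mnm (ex k) w u) has_sum f (V w u)) UNIV"
      using norm_summable_imp_has_sum[OF s2 s1] by (simp add: ex(1))
  qed
qed

definition ew :: "'n \<Rightarrow> nat \<Rightarrow> ('n::finite \<Rightarrow> nat) \<times> ('n \<Rightarrow> nat)" where
  "ew j i = ((\<lambda>k. if k = j then i else 0), (\<lambda>k. 0))"
definition eu :: "'n \<Rightarrow> nat \<Rightarrow> ('n::finite \<Rightarrow> nat) \<times> ('n \<Rightarrow> nat)" where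
  "eu j i = ((\<lambda>k. 0), (\<lambda>k. if k = j then i else 0))"

lemma prod_pow_if:
  fixes w :: "'n::finite \<Rightarrow> complex"
  shows "(\<Prod>k\<in>UNIV. w k ^ (if k = j then i else 0)) = w j ^ i"
proof -
  have "(\<Prod>k\<in>UNIV. w k ^ (if k = j then i else 0)) = (\<Prod>k\<in>UNIV. if k = j then w j ^ i else 1)"
    by (rule prod.cong) auto
  also have "\<dots> = w j ^ i" by (subst prod.delta) auto
  finally show ?thesis .
qed
lemma mnm_ew: "mnm (ew j i) w u = w j ^ i"
  by (simp add: mnm_def ew_def prod_pow_if)
lemma mnm_eu: "mnm (eu j i) w u = u j ^ i"
  by (simp add: mnm_def eu_def prod_pow_if)
lemma deg_ew: "deg (ew j i) = i"
  by (simp add: deg_def ew_def)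
lemma deg_eu: "deg (eu j i) = i"
  by (simp add: deg_def eu_def)

lemma hasrep_hol_w:
  fixes f :: "complex \<Rightarrow> complex" and j :: "'n::finite"
  assumes "f holomorphic_on ball 0 R" "\<And>x. x \<in> ball 0 R \<Longrightarrow> norm (f x) \<le> B" "0 < r" "2 * r < R"
  shows "hasrep r (\<lambda>(w::'n \<Rightarrow> complex) u. f (w j)) (2 * B)"
  by (rule hasrep_hol_gen[OF assms, where ex = "ew j"]) (auto simp: mnm_ew deg_ew inpd_def)

lemma hasrep_hol_u:
  fixes f :: "complex \<Rightarrow> complex" and j :: "'n::finite"
  assumes "f holomorphic_on ball 0 R" "\<And>x. x \<in> ball 0 R \<Longrightarrow> norm (f x) \<le> B" "0 < r" "2 * r < R"
  shows "hasrep r (\<lambda>w (u::'n \<Rightarrow> complex). f (u j)) (2 * B)"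
  by (rule hasrep_hol_gen[OF assms, where ex = "eu j"]) (auto simp: mnm_eu deg_eu inpd_def)

lemma hasrep_analytic:
  fixes F :: "('n::finite \<Rightarrow> complex) \<Rightarrow> ('n \<Rightarrow> complex) \<Rightarrow> complex"
  assumes "hasrep r F M" "0 < r"
  shows "\<exists>a. \<forall>w u. inpd r w u \<longrightarrow>
     ((\<lambda>(\<alpha>, \<beta>). a \<alpha> \<beta> * (\<Prod>j\<in>UNIV. w j ^ \<alpha> j) * (\<Prod>j\<in>UNIV. u j ^ \<beta> j)) has_sum F w u) UNIV"
proof -
  obtain c :: "nat \<Rightarrow> complex" and e K m where 1: "((\<lambda>k. norm (c k) * r ^ deg (e k)) has_sum m) K" "m \<le> M"
      "\<And>w u. inpd r w u \<Longrightarrow> ((\<lambda>k. c k * mnm (e k) w u) has_sum F w u) K"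
    by (rule hasrepE[OF assms(1)]) blast
  define fib where "fib p = {k\<in>K. e k = p}" for p
  define a where "a \<alpha> \<beta> = infsum c (fib (\<alpha>, \<beta>))" for \<alpha> \<beta>
  have gs: "(\<lambda>k. norm (c k) * r ^ deg (e k)) summable_on K" using 1(1) by (auto simp: summable_on_def)
  have hs: "(\<lambda>k. c k * mnm (e k) w u) summable_on K" if "inpd r w u" for w u
  proof -
    have "(\<lambda>k. norm (c k * mnm (e k) w u)) summable_on K"
      by (rule summable_on_comparison_test[OF gs])
         (auto simp: norm_mult intro!: mult_left_mono norm_mnm_le that less_imp_le[OF assms(2)])
    thus ?thesis by (rule abs_summable_summable)
  qed
  define w0 :: "'n \<Rightarrow> complex" where "w0 = (\<lambda>_. of_real (r/2))"
  have in0: "inpd r w0 w0" using assms(2) by (simp add: inpd_def w0_def)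
  have mnm0: "mnm p w0 w0 = of_real ((r/2) ^ deg p)" for p
    by (simp add: mnm_def deg_def w0_def power_sum power_add)
  have cfib: "c summable_on fib p" for p
  proof -
    have "(\<lambda>k. c k * mnm (e k) w0 w0) summable_on fib p"
      by (rule summable_on_subset_banach[OF hs[OF in0]]) (auto simp: fib_def)
    hence "(\<lambda>k. c k * mnm p w0 w0) summable_on fib p"
      by (rule summable_on_cong[THEN iffD1, rotated]) (auto simp: fib_def)
    moreover have "mnm p w0 w0 \<noteq> 0" using assms(2) by (simp add: mnm0)
    ultimately show ?thesis using summable_on_cmult_left'[of "mnm p w0 w0" c "fib p"] by simp
  qed
  show ?thesis
  proof (intro exI[of _ a] allI impI)
    fix w u :: "'n \<Rightarrow> complex" assume wu: "inpd r w u"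
    define h where "h k = c k * mnm (e k) w u" for k
    have Kimg: "K = snd ` (SIGMA p:UNIV. fib p)" by (force simp: fib_def image_iff)
    have inj: "inj_on snd (SIGMA p:UNIV. fib p)" by (auto simp: inj_on_def fib_def)
    have "(h has_sum F w u) K" using 1(3)[OF wu] by (simp add: h_def[abs_def])
    hence "((h \<circ> snd) has_sum F w u) (SIGMA p:UNIV. fib p)"
      using has_sum_reindex[OF inj, of h] Kimg by simp
    hence tot: "((\<lambda>q. h (snd q)) has_sum F w u) (SIGMA p:UNIV. fib p)" by (simp add: o_def)
    have inner: "((\<lambda>k. h (snd (p, k))) has_sum (a (fst p) (snd p) * mnm p w u)) (fib p)" for p
    proof -
      have "((\<lambda>k. c k * mnm p w u) has_sum (infsum c (fib p) * mnm p w u)) (fib p)"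
        by (rule has_sum_cmult_left[OF has_sum_infsum[OF cfib]])
      moreover have "a (fst p) (snd p) = infsum c (fib p)" by (simp add: a_def)
      moreover have "((\<lambda>k. h (snd (p, k))) has_sum (infsum c (fib p) * mnm p w u)) (fib p) \<longleftrightarrow>
                     ((\<lambda>k. c k * mnm p w u) has_sum (infsum c (fib p) * mnm p w u)) (fib p)"
        by (rule has_sum_cong) (simp add: h_def fib_def)
      ultimately show ?thesis by simp
    qed
    have "((\<lambda>p. a (fst p) (snd p) * mnm p w u) has_sum F w u) UNIV"
      by (rule has_sum_Sigma'[OF tot]) (use inner in simp)
    thus "((\<lambda>(\<alpha>, \<beta>). a \<alpha> \<beta> * (\<Prod>j\<in>UNIV. w j ^ \<alpha> j) * (\<Prod>j\<in>UNIV. u j ^ \<beta> j)) has_sum F w u) UNIV"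
      by (simp add: mnm_def case_prod_unfold mult.assoc)
  qed
qed



lemma poch_lower:
  fixes t :: complex
  assumes "\<And>i. norm (t + of_nat i) \<ge> real i + 1"
  shows "norm (pochhammer t q) \<ge> fact q"
proof (induction q)
  case 0 then show ?case by simp
next
  case (Suc q)
  have "fact (Suc q) = fact q * (real q + 1)" by (simp add: algebra_simps)
  also have "\<dots> \<le> norm (pochhammer t q) * norm (t + of_nat q)"
    by (rule mult_mono[OF Suc assms]) auto
  also have "\<dots> = norm (pochhammer t (Suc q))" by (simp add: pochhammer_Suc norm_mult)
  finally show ?case .
qed

lemma poch_upper:
  fixes t :: complex
  assumes "norm t \<le> real N"
  shows "norm (pochhammer (t - of_nat q) q) \<le> pochhammer (real N + 1) q"
proof (induction q)
  case 0 then show ?case by simp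
next
  case (Suc q)
  have "pochhammer (t - of_nat (Suc q)) (Suc q) = (t - of_nat (Suc q)) * pochhammer (t - of_nat q) q"
    by (simp add: pochhammer_rec algebra_simps)
  hence "norm (pochhammer (t - of_nat (Suc q)) (Suc q)) = norm (t - of_nat (Suc q)) * norm (pochhammer (t - of_nat q) q)"
    by (simp add: norm_mult)
  also have "\<dots> \<le> (real N + 1 + real q) * pochhammer (real N + 1) q"
  proof (rule mult_mono[OF _ Suc])
    have "norm (t - of_nat (Suc q)) \<le> norm t + norm (of_nat (Suc q) :: complex)" by (rule norm_triangle_ineq4)
    moreover have "norm (of_nat (Suc q) :: complex) = real q + 1" by (simp only: norm_of_nat) 
    ultimately show "norm (t - of_nat (Suc q)) \<le> real N + 1 + real q" using assms by linarith
  qed (auto intro: pochhammer_nonneg)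
  also have "\<dots> = pochhammer (real N + 1) (Suc q)" by (simp add: pochhammer_Suc algebra_simps)
  finally show ?case .
qed

lemma poch_nat_le: "pochhammer (real N + 1) q \<le> 2 ^ (N + q) * fact q"
proof -
  have "fact (N + q) = (fact N :: real) * pochhammer (real N + 1) q"
    using pochhammer_product'[of "1::real" N q] by (simp add: pochhammer_fact add.commute)
  moreover have "(fact (N + q) :: real) \<le> fact N * fact q * 2 ^ (N + q)"
  proof -
    have "real (fact q * fact (N + q - q) * ((N + q) choose q)) = real (fact (N + q))"
      using binomial_fact_lemma[of q "N + q"] by (simp only:)
    hence "fact q * fact N * real ((N + q) choose q) = fact (N + q)" by (simp only: of_nat_mult of_nat_fact add_diff_cancel_right')
    moreover have "real ((N + q) choose q) \<le> 2 ^ (N + q)"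
    proof -
      have "real ((N + q) choose q) \<le> real (2 ^ (N + q))"
        by (simp only: of_nat_le_iff binomial_le_pow2)
      thus ?thesis by simp
    qed
    ultimately have "fact (N + q) \<le> fact q * fact N * (2::real) ^ (N + q)"
      by (metis mult_left_mono fact_ge_zero mult_nonneg_nonneg)
    thus ?thesis by (simp add: mult_ac)
  qed
  ultimately have "fact N * pochhammer (real N + 1) q \<le> fact N * (2 ^ (N + q) * fact q)"
    by (simp add: mult_ac)
  thus ?thesis by (simp add: mult_le_cancel_left_pos)
qed

lemma fact_split_le: "k \<le> n \<Longrightarrow> (fact n :: real) \<le> 2 ^ n * fact k * fact (n - k)"
proof -
  assume kn: "k \<le> n"
  have "real (fact k * fact (n - k) * (n choose k)) = real (fact n)"
    using binomial_fact_lemma[OF kn] by (simp only:)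
  hence "fact k * fact (n - k) * real (n choose k) = fact n" by (simp only: of_nat_mult of_nat_fact)
  moreover have "real (n choose k) \<le> 2 ^ n"
  proof -
    have "real (n choose k) \<le> real (2 ^ n)"
      by (simp only: of_nat_le_iff binomial_le_pow2)
    thus ?thesis by simp
  qed
  ultimately have "fact n \<le> fact k * fact (n - k) * (2::real) ^ n"
    by (metis mult_left_mono fact_ge_zero mult_nonneg_nonneg)
  thus ?thesis by (simp add: mult_ac)
qed

definition Fr :: "int \<Rightarrow> real" where
  "Fr m = fact (nat (- m)) / fact (nat m)"

lemma Fr_pos: "Fr m > 0" by (simp add: Fr_def)

lemma rGamma_bound:
  fixes s0 :: complex
  shows "\<exists>K>0. \<forall>m::int. \<forall>s. norm (s - (s0 + of_int m)) \<le> 1 \<longrightarrow>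
           norm (rGamma s) \<le> K * 2 ^ nat \<bar>m\<bar> * Fr m"
proof -
  define A where "A = norm s0 + 1"
  define N where "N = nat \<lceil>A\<rceil>"
  define k0 where "k0 = N + 1"
  have AN: "A \<le> real N" unfolding N_def by linarith
  define S where "S = cball s0 (real k0 + 1)"
  have "compact (rGamma ` S)" unfolding S_def
    by (intro compact_continuous_image continuous_on_rGamma) auto
  then obtain B0 where B0: "\<And>x. x \<in> S \<Longrightarrow> norm (rGamma x) \<le> B0"
    using compact_imp_bounded[of "rGamma ` S"] by (auto simp: bounded_iff)
  define B where "B = max B0 0"
  have B: "\<And>x. x \<in> S \<Longrightarrow> norm (rGamma x) \<le> B" "B \<ge> 0" using B0 by (force simp: B_def)+
  define K where "K = B * (fact k0 + 2 ^ N) + 1"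
  have Kpos: "K > 0" using B by (simp add: K_def add_nonneg_pos)
  have p1: "0 \<le> B * 2 ^ N" "0 \<le> B * fact k0" using B(2) by simp_all
  have BK1: "B * fact k0 \<le> K" unfolding K_def distrib_left using p1 by linarith
  have BK2: "B * 2 ^ N \<le> K" unfolding K_def distrib_left using p1 by linarith
  show ?thesis
  proof (intro exI[of _ K] conjI allI impI Kpos)
    fix m :: int and s :: complex
    assume sm: "norm (s - (s0 + of_int m)) \<le> 1"
    define t where "t = s - of_int m"
    have ts0: "norm (t - s0) \<le> 1" using sm by (simp add: t_def algebra_simps)
    have tA: "norm t \<le> A"
      using norm_triangle_ineq2[of t s0] ts0 unfolding A_def by linarith
    show "norm (rGamma s) \<le> K * 2 ^ nat \<bar>m\<bar> * Fr m"
    proof (cases "m \<ge> 0")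
      case True
      define mm where "mm = nat m"
      have m: "m = int mm" using True by (simp add: mm_def)
      have Frm: "Fr (int mm) = 1 / fact mm" by (simp add: Fr_def)
      have s: "s = t + of_nat mm" by (simp add: t_def m)
      show ?thesis
      proof (cases "mm \<le> k0")
        case True
        have "s \<in> S"
        proof -
          have e: "s - s0 = (t - s0) + of_nat mm" by (simp add: s)
          have "norm (s - s0) \<le> norm (t - s0) + norm (of_nat mm :: complex)"
            unfolding e by (rule norm_triangle_ineq)
          moreover have "norm (of_nat mm :: complex) = real mm" by (simp only: norm_of_nat)
          moreover have "real mm \<le> real k0" using True by simp
          ultimately have "norm (s - s0) \<le> real k0 + 1" using ts0 by linarith
          thus ?thesis by (simp add: S_def dist_norm norm_minus_commute)
        qed
        hence "norm (rGamma s) \<le> B" by (rule B)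
        also have "B \<le> B * fact k0 / fact mm"
          using B(2) fact_mono[OF True, where 'a=real] by (simp add: field_simps mult_left_mono)
        also have "\<dots> \<le> K * 2 ^ mm / fact mm"
        proof -
          have "B * fact k0 \<le> K * 2 ^ mm"
          proof -
            have "K * 1 \<le> K * 2 ^ mm" by (rule mult_left_mono) (use Kpos in auto)
            thus ?thesis using BK1 by linarith
          qed
          thus ?thesis by (simp add: divide_right_mono)
        qed
        finally show ?thesis by (simp add: m Frm)
      next
        case False
        define q where "q = mm - k0"
        have mmq: "mm = k0 + q" using False by (simp add: q_def)
        have tk: "t + of_nat k0 \<in> S"
        proof -
          have "norm ((t - s0) + of_nat k0) \<le> norm (t - s0) + norm (of_nat k0 :: complex)"
            by (rule norm_triangle_ineq)
          moreover have "norm (of_nat k0 :: complex) = real k0" by (simp only: norm_of_nat)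
          moreover have "(t - s0) + of_nat k0 = (t + of_nat k0) - s0" by simp
          ultimately have "norm ((t + of_nat k0) - s0) \<le> norm (t - s0) + real k0" by metis
          hence "norm ((t + of_nat k0) - s0) \<le> real k0 + 1" using ts0 by linarith
          thus ?thesis by (simp add: S_def dist_norm norm_minus_commute)
        qed
        have low: "norm (pochhammer (t + of_nat k0) q) \<ge> fact q"
        proof (rule poch_lower)
          fix i :: nat
          have e: "(of_nat (k0 + i) :: complex) = (t + of_nat k0 + of_nat i) - t" by simp
          have "norm (of_nat (k0 + i) :: complex) \<le> norm (t + of_nat k0 + of_nat i) + norm t"
            unfolding e by (rule norm_triangle_ineq4)
          moreover have "norm (of_nat (k0 + i) :: complex) = real (k0 + i)" by (simp only: norm_of_nat)
          ultimately have "real k0 + real i - norm t \<le> norm (t + of_nat k0 + of_nat i)" by simp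
          thus "norm (t + of_nat k0 + of_nat i) \<ge> real i + 1" using tA AN by (simp add: k0_def)
        qed
        have eq: "rGamma (t + of_nat k0) = pochhammer (t + of_nat k0) q * rGamma s"
          using pochhammer_rGamma[of "t + of_nat k0" q] by (simp add: s mmq add.assoc)
        have fq: "(fact q :: real) > 0" by simp
        have "fact q * norm (rGamma s) \<le> norm (pochhammer (t + of_nat k0) q) * norm (rGamma s)"
          by (rule mult_right_mono[OF low]) simp
        also have "\<dots> = norm (rGamma (t + of_nat k0))" by (simp add: eq norm_mult)
        also have "\<dots> \<le> B" using B(1)[OF tk] .
        finally have "norm (rGamma s) \<le> B / fact q" using fq by (simp add: field_simps)
        also have "\<dots> \<le> B * (2 ^ mm * fact k0) / fact mm"
        proof -
          have "fact mm \<le> 2 ^ mm * fact k0 * (fact q :: real)"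
            using fact_split_le[of k0 mm] by (simp add: mmq)
          thus ?thesis using B(2) fq by (simp add: field_simps mult_left_mono)
        qed
        also have "\<dots> \<le> K * 2 ^ mm / fact mm"
        proof -
          have "B * (2 ^ mm * fact k0) \<le> K * 2 ^ mm"
            using BK1 by (simp add: mult_ac mult_right_mono)
          thus ?thesis by (simp add: divide_right_mono)
        qed
        finally show ?thesis by (simp add: m Frm)
      qed
    next
      case False
      define q where "q = nat (- m)"
      have m: "m = - int q" using False by (simp add: q_def)
      have Frm: "Fr (- int q) = fact q" by (simp add: Fr_def)
      have s: "s = t - of_nat q" by (simp add: t_def m)
      have tS: "t \<in> S" using ts0 by (simp add: S_def dist_norm norm_minus_commute)
      have eq: "rGamma s = pochhammer (t - of_nat q) q * rGamma t"
        using pochhammer_rGamma[of s q] by (simp add: s)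
      have "norm (rGamma s) = norm (pochhammer (t - of_nat q) q) * norm (rGamma t)"
        by (simp add: eq norm_mult)
      also have "\<dots> \<le> (2 ^ (N + q) * fact q) * B"
      proof (rule mult_mono)
        show "norm (pochhammer (t - of_nat q) q) \<le> 2 ^ (N + q) * fact q"
          using poch_upper[of t N q] tA AN poch_nat_le[of N q] by linarith
      qed (use B tS in auto)
      also have "\<dots> = (B * 2 ^ N) * 2 ^ q * fact q" by (simp add: power_add mult_ac)
      also have "\<dots> \<le> K * 2 ^ q * fact q" using BK2 by (simp add: mult_right_mono)
      finally show ?thesis by (simp add: m Frm)
    qed
  qed
qed



lemma Ln_bounds:
  fixes z0 :: complex
  assumes z0: "z0 \<noteq> 0" "Arg z0 < pi"
  obtains R where "0 < R" "R \<le> 1" "R \<le> norm z0 / 2"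
    "\<And>x. x \<in> ball 0 R \<Longrightarrow> z0 + x \<notin> \<real>\<^sub>\<le>\<^sub>0"
    "\<And>x. x \<in> ball 0 R \<Longrightarrow> \<bar>ln (norm (z0 + x)) - ln (norm z0)\<bar> \<le> 1"
    "\<And>x. x \<in> ball 0 R \<Longrightarrow> norm (Ln (z0 + x)) \<le> \<bar>ln (norm z0)\<bar> + 1 + pi"
proof -
  have z0n: "z0 \<notin> \<real>\<^sub>\<le>\<^sub>0"
  proof
    assume "z0 \<in> \<real>\<^sub>\<le>\<^sub>0"
    hence "Re z0 \<le> 0" "Im z0 = 0" by (auto simp: complex_nonpos_Reals_iff)
    with z0(1) have "Re z0 < 0" by (metis complex_eq_iff less_eq_real_def zero_complex.simps)
    with \<open>Im z0 = 0\<close> have "Arg z0 = pi" by (simp add: Arg_eq_pi)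
    with z0(2) show False by simp
  qed
  have "open (- \<real>\<^sub>\<le>\<^sub>0 :: complex set)" by (simp add: open_Compl)
  then obtain e where e: "e > 0" "ball z0 e \<subseteq> - \<real>\<^sub>\<le>\<^sub>0"
    using z0n open_contains_ball by blast
  define R where "R = min (min e (norm z0 / 2)) 1"
  have nz: "norm z0 > 0" using z0 by simp
  show ?thesis
  proof (rule that[of R])
    show "0 < R" "R \<le> 1" "R \<le> norm z0 / 2" using e nz by (auto simp: R_def)
    fix x :: complex assume x: "x \<in> ball 0 R"
    hence xn: "norm x < R" by simp
    have "z0 + x \<in> ball z0 e" using xn by (simp add: dist_norm R_def)
    thus nr: "z0 + x \<notin> \<real>\<^sub>\<le>\<^sub>0" using e by auto
    have lo: "norm z0 / 2 \<le> norm (z0 + x)"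
      using norm_triangle_ineq2[of z0 "-x"] xn by (simp add: R_def)
    have hi: "norm (z0 + x) \<le> 3 / 2 * norm z0"
      using norm_triangle_ineq[of z0 x] xn by (simp add: R_def)
    have pos: "0 < norm (z0 + x)" using lo nz by linarith
    have l1: "ln (norm (z0 + x)) \<le> ln (norm z0) + 1"
    proof -
      have "ln (norm (z0 + x)) \<le> ln (3 / 2 * norm z0)" by (rule ln_mono[OF hi pos])
      also have "\<dots> = ln (3/2) + ln (norm z0)" by (subst ln_mult) (use nz in auto)
      also have "ln (3/2::real) \<le> 1" using ln_le_minus_one[of "3/2::real"] by simp
      finally show ?thesis by simp
    qed
    have l2: "ln (norm z0) - 1 \<le> ln (norm (z0 + x))"
    proof -
      have "ln (norm z0 / 2) \<le> ln (norm (z0 + x))" by (rule ln_mono[OF lo]) (use nz in simp)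
      moreover have "ln (norm z0 / 2) = ln (norm z0) - ln 2" using nz by (simp add: ln_div)
      moreover have "ln (2::real) \<le> 1" using ln_le_minus_one[of "2::real"] by simp
      ultimately show ?thesis by simp
    qed
    show "\<bar>ln (norm (z0 + x)) - ln (norm z0)\<bar> \<le> 1" using l1 l2 by linarith
    have nz2: "z0 + x \<noteq> 0" using pos by auto
    have "norm (Ln (z0 + x)) \<le> \<bar>Re (Ln (z0 + x))\<bar> + \<bar>Im (Ln (z0 + x))\<bar>" by (rule cmod_le)
    also have "Re (Ln (z0 + x)) = ln (norm (z0 + x))" using nz2 by simp
    also have "\<bar>Im (Ln (z0 + x))\<bar> \<le> pi" using mpi_less_Im_Ln[OF nz2] Im_Ln_le_pi[OF nz2] by linarith
    finally show "norm (Ln (z0 + x)) \<le> \<bar>ln (norm z0)\<bar> + 1 + pi" using l1 l2 by linarith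
  qed
qed

lemma exp_series_has_sum:
  fixes x :: "'a::{real_normed_field,banach}"
  shows "((\<lambda>k. of_real (inverse (fact k)) * x ^ k) has_sum exp x) UNIV"
proof -
  have s1: "(\<lambda>n. x ^ n /\<^sub>R fact n) sums exp x" by (rule exp_converges)
  have "(\<lambda>n. norm x ^ n /\<^sub>R fact n) sums exp (norm x)" by (rule exp_converges)
  hence s2: "summable (\<lambda>n. norm (x ^ n /\<^sub>R fact n))"
    by (simp add: sums_summable norm_power divide_inverse)
  have "((\<lambda>n. x ^ n /\<^sub>R fact n) has_sum exp x) UNIV" by (rule norm_summable_imp_has_sum[OF s2 s1])
  thus ?thesis by (simp add: scaleR_conv_of_real)
qed

lemma exp_series_real_has_sum:
  fixes x :: real
  shows "((\<lambda>k. inverse (fact k) * x ^ k) has_sum exp x) UNIV"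
  using exp_series_has_sum[of x] by simp

lemma factor_rep:
  fixes z0 lam0 :: complex and j :: "'n::finite"
  assumes z0: "z0 \<noteq> 0" "Arg z0 < pi"
  obtains R C where "0 < R" "R \<le> 1" "0 < C" "R \<le> norm z0 / 2"
    "\<And>r m. 0 < r \<Longrightarrow> 2 * r < R \<Longrightarrow> hasrep r (\<lambda>(w::'n \<Rightarrow> complex) u.
        zpow (z0 + w j) (of_int m + (lam0 + u j)) / Gamma (of_int m + (lam0 + u j) + 1))
        (C * exp (real_of_int m * ln (norm z0) + real_of_int \<bar>m\<bar>) * 2 ^ nat \<bar>m\<bar> * Fr m)"
proof -
  obtain R where R: "0 < R" "R \<le> 1" "R \<le> norm z0 / 2"
    "\<And>x. x \<in> ball 0 R \<Longrightarrow> z0 + x \<notin> \<real>\<^sub>\<le>\<^sub>0"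
    "\<And>x. x \<in> ball 0 R \<Longrightarrow> \<bar>ln (norm (z0 + x)) - ln (norm z0)\<bar> \<le> 1"
    "\<And>x. x \<in> ball 0 R \<Longrightarrow> norm (Ln (z0 + x)) \<le> \<bar>ln (norm z0)\<bar> + 1 + pi"
    using Ln_bounds[OF z0] by blast
  define \<Lambda> where "\<Lambda> = \<bar>ln (norm z0)\<bar> + 1 + pi"
  have \<Lambda>0: "0 \<le> \<Lambda>" unfolding \<Lambda>_def using pi_gt_zero by linarith
  obtain KG where KG: "KG > 0" "\<And>m s. norm (s - ((lam0 + 1) + of_int m)) \<le> 1 \<Longrightarrow>
      norm (rGamma s) \<le> KG * 2 ^ nat \<bar>m\<bar> * Fr m"
    using rGamma_bound[of "lam0 + 1"] by blast
  define C where "C = 2 * exp (norm lam0 * \<Lambda>) * (2 * exp \<Lambda>) * (2 * KG)"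
  have Cpos: "0 < C" using KG by (simp add: C_def)
  have nz: "z0 + x \<noteq> 0" if "x \<in> ball 0 R" for x
    using R(4)[OF that] by auto
  have hol_L: "(\<lambda>x. Ln (z0 + x)) holomorphic_on ball 0 R"
    by (rule holomorphic_on_Ln') (use R(4) in \<open>auto intro!: holomorphic_intros\<close>)
  show ?thesis
  proof (rule that[OF R(1,2) Cpos R(3)])
    fix r :: real and m :: int
    assume r: "0 < r" "2 * r < R"
    have r1: "r \<le> 1" using r R by linarith
    define BA where "BA = exp (real_of_int m * ln (norm z0) + real_of_int \<bar>m\<bar> + norm lam0 * \<Lambda>)"
    have hA: "hasrep r (\<lambda>(w::'n \<Rightarrow> complex) u. exp ((of_int m + lam0) * Ln (z0 + w j))) (2 * BA)"
    proof (rule hasrep_hol_w[OF _ _ r])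
      show "(\<lambda>x. exp ((of_int m + lam0) * Ln (z0 + x))) holomorphic_on ball 0 R"
        by (intro holomorphic_intros hol_L)
      fix x :: complex assume x: "x \<in> ball 0 R"
      have "norm (exp ((of_int m + lam0) * Ln (z0 + x))) = exp (Re ((of_int m + lam0) * Ln (z0 + x)))"
        by (rule norm_exp_eq_Re)
      also have "Re ((of_int m + lam0) * Ln (z0 + x)) = real_of_int m * ln (norm (z0 + x)) + Re (lam0 * Ln (z0 + x))"
        using nz[OF x] by (simp add: distrib_right)
      also have "\<dots> \<le> real_of_int m * ln (norm z0) + real_of_int \<bar>m\<bar> + norm lam0 * \<Lambda>"
      proof -
        have "real_of_int m * ln (norm (z0 + x)) - real_of_int m * ln (norm z0) =
              real_of_int m * (ln (norm (z0 + x)) - ln (norm z0))" by (simp add: algebra_simps)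
        also have "\<dots> \<le> \<bar>real_of_int m * (ln (norm (z0 + x)) - ln (norm z0))\<bar>" by simp
        also have "\<dots> = \<bar>real_of_int m\<bar> * \<bar>ln (norm (z0 + x)) - ln (norm z0)\<bar>" by (simp add: abs_mult)
        also have "\<dots> \<le> \<bar>real_of_int m\<bar> * 1" by (rule mult_left_mono[OF R(5)[OF x]]) simp
        finally have 1: "real_of_int m * ln (norm (z0 + x)) \<le> real_of_int m * ln (norm z0) + real_of_int \<bar>m\<bar>" by simp
        have "Re (lam0 * Ln (z0 + x)) \<le> norm (lam0 * Ln (z0 + x))" by (rule complex_Re_le_cmod)
        also have "\<dots> = norm lam0 * norm (Ln (z0 + x))" by (simp add: norm_mult)
        also have "\<dots> \<le> norm lam0 * \<Lambda>" unfolding \<Lambda>_def by (rule mult_left_mono[OF R(6)[OF x]]) simp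
        finally show ?thesis using 1 by linarith
      qed
      finally show "norm (exp ((of_int m + lam0) * Ln (z0 + x))) \<le> BA" unfolding BA_def by simp
    qed
    define Mk where "Mk k = inverse (fact k) * (r * \<Lambda>) ^ k * 2" for k :: nat
    have hBk: "hasrep r (\<lambda>(w::'n \<Rightarrow> complex) u. of_real (inverse (fact k)) * mnm (eu j k) w u * Ln (z0 + w j) ^ k) (Mk k)" for k
    proof -
      have h0: "hasrep r (\<lambda>(w::'n \<Rightarrow> complex) u. Ln (z0 + w j) ^ k) (2 * \<Lambda> ^ k)"
      proof (rule hasrep_hol_w[OF _ _ r])
        show "(\<lambda>x. Ln (z0 + x) ^ k) holomorphic_on ball 0 R" by (intro holomorphic_intros hol_L)
        fix x :: complex assume x: "x \<in> ball 0 R"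
        show "norm (Ln (z0 + x) ^ k) \<le> \<Lambda> ^ k"
          unfolding norm_power by (rule power_mono) (use R(6)[OF x] in \<open>auto simp: \<Lambda>_def\<close>)
      qed
      show ?thesis
        by (rule hasrep_mono[OF hasrep_mnm_mult[OF h0 less_imp_le[OF r(1)], of "of_real (inverse (fact k))" "eu j k"]])
           (simp add: Mk_def deg_eu power_mult_distrib mult_ac norm_inverse norm_fact)
    qed
    have Mks: "(Mk has_sum (exp (r * \<Lambda>) * 2)) UNIV"
      unfolding Mk_def by (rule has_sum_cmult_left[OF exp_series_real_has_sum])
    have hB0: "hasrep r (\<lambda>(w::'n \<Rightarrow> complex) u. \<Sum>\<^sub>\<infinity>k. of_real (inverse (fact k)) * mnm (eu j k) w u * Ln (z0 + w j) ^ k)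
                 (\<Sum>\<^sub>\<infinity>k. Mk k)"
      by (rule hasrep_sum(1)[OF less_imp_le[OF r(1)] hBk]) (use Mks in \<open>auto simp: summable_on_def\<close>)
    have Mle: "(\<Sum>\<^sub>\<infinity>k. Mk k) \<le> 2 * exp \<Lambda>"
    proof -
      have "(\<Sum>\<^sub>\<infinity>k. Mk k) = exp (r * \<Lambda>) * 2" by (rule infsumI[OF Mks])
      moreover have "r * \<Lambda> \<le> \<Lambda>" using r1 \<Lambda>0 using mult_right_mono[OF r1 \<Lambda>0] by simp
      ultimately show ?thesis by simp
    qed
    have hB: "hasrep r (\<lambda>(w::'n \<Rightarrow> complex) u. exp (u j * Ln (z0 + w j))) (2 * exp \<Lambda>)"
    proof (rule hasrep_cong[OF hasrep_mono[OF hB0 Mle]])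
      fix w u :: "'n \<Rightarrow> complex"
      have "((\<lambda>k. of_real (inverse (fact k)) * (u j * Ln (z0 + w j)) ^ k) has_sum exp (u j * Ln (z0 + w j))) UNIV"
        by (rule exp_series_has_sum)
      hence "(\<Sum>\<^sub>\<infinity>k. of_real (inverse (fact k)) * (u j * Ln (z0 + w j)) ^ k) = exp (u j * Ln (z0 + w j))"
        by (rule infsumI)
      thus "(\<Sum>\<^sub>\<infinity>k. of_real (inverse (fact k)) * mnm (eu j k) w u * Ln (z0 + w j) ^ k) = exp (u j * Ln (z0 + w j))"
        by (simp add: mnm_eu power_mult_distrib mult.assoc)
    qed
    have hC: "hasrep r (\<lambda>(w::'n \<Rightarrow> complex) u. rGamma (of_int m + lam0 + 1 + u j)) (2 * (KG * 2 ^ nat \<bar>m\<bar> * Fr m))"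
    proof (rule hasrep_hol_u[where R = 1, OF _ _ r(1)])
      show "(\<lambda>x. rGamma (of_int m + lam0 + 1 + x)) holomorphic_on ball 0 1" by (intro holomorphic_intros)
      fix x :: complex assume x: "x \<in> ball 0 1"
      show "norm (rGamma (of_int m + lam0 + 1 + x)) \<le> KG * 2 ^ nat \<bar>m\<bar> * Fr m"
        by (rule KG(2)) (use x in \<open>simp add: algebra_simps\<close>)
    qed (use r R in auto)
    note hABC = hasrep_mult[OF hasrep_mult[OF hA hB less_imp_le[OF r(1)]] hC less_imp_le[OF r(1)]]
    have bnd: "2 * BA * (2 * exp \<Lambda>) * (2 * (KG * 2 ^ nat \<bar>m\<bar> * Fr m)) =
               C * exp (real_of_int m * ln (norm z0) + real_of_int \<bar>m\<bar>) * 2 ^ nat \<bar>m\<bar> * Fr m"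
      by (simp add: BA_def C_def exp_add mult_ac)
    show "hasrep r (\<lambda>(w::'n \<Rightarrow> complex) u.
        zpow (z0 + w j) (of_int m + (lam0 + u j)) / Gamma (of_int m + (lam0 + u j) + 1))
        (C * exp (real_of_int m * ln (norm z0) + real_of_int \<bar>m\<bar>) * 2 ^ nat \<bar>m\<bar> * Fr m)"
    proof (rule hasrep_cong[OF hABC[unfolded bnd]])
      fix w u :: "'n \<Rightarrow> complex" assume wu: "inpd r w u"
      have x: "w j \<in> ball 0 R" using wu r unfolding inpd_def by (auto dest: spec[of _ j])
      have nz': "z0 + w j \<noteq> 0" by (rule nz[OF x])
      have zp: "zpow (z0 + w j) \<mu> = exp (\<mu> * Ln (z0 + w j))" for \<mu>
        by (simp add: zpow_def Ln_Arg[OF nz'])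
      have e1: "(of_int m + (lam0 + u j)) * Ln (z0 + w j) = (of_int m + lam0) * Ln (z0 + w j) + u j * Ln (z0 + w j)"
        by (simp add: algebra_simps)
      have e2: "of_int m + (lam0 + u j) + 1 = of_int m + lam0 + 1 + u j" by (simp add: algebra_simps)
      show "exp ((of_int m + lam0) * Ln (z0 + w j)) * exp (u j * Ln (z0 + w j)) * rGamma (of_int m + lam0 + 1 + u j) =
            zpow (z0 + w j) (of_int m + (lam0 + u j)) / Gamma (of_int m + (lam0 + u j) + 1)"
        unfolding zp e1 e2 exp_add by (simp add: divide_inverse rGamma_inverse_Gamma)
    qed
  qed
qed



lemma Lat_sum_zero:
  fixes v :: "'n::finite \<Rightarrow> 'd::finite \<Rightarrow> int"
  assumes "has_height_one v" "l \<in> Lat v"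
  shows "(\<Sum>j\<in>UNIV. l j) = 0"
proof -
  obtain h where h: "\<And>j. (\<Sum>i\<in>UNIV. h i * v j i) = 1"
    using assms(1) unfolding has_height_one_def by blast
  have "(\<Sum>j\<in>UNIV. l j) = (\<Sum>j\<in>UNIV. l j * (\<Sum>i\<in>UNIV. h i * v j i))" by (simp add: h)
  also have "\<dots> = (\<Sum>j\<in>UNIV. \<Sum>i\<in>UNIV. l j * (h i * v j i))" by (simp add: sum_distrib_left)
  also have "\<dots> = (\<Sum>i\<in>UNIV. \<Sum>j\<in>UNIV. l j * (h i * v j i))" by (rule sum.swap)
  also have "\<dots> = (\<Sum>i\<in>UNIV. h i * (\<Sum>j\<in>UNIV. l j * v j i))"
    by (rule sum.cong[OF refl]) (simp add: sum_distrib_left mult.left_commute)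
  also have "\<dots> = 0" using assms(2) by (simp add: Lat_def)
  finally show ?thesis .
qed

lemma Lat_bound:
  fixes v :: "'n::finite \<Rightarrow> 'd::finite \<Rightarrow> int"
  assumes li: "lin_indep_on v I"
  obtains M1 where "M1 \<ge> 0" "\<And>l. l \<in> Lat v \<Longrightarrow>
     (\<Sum>j\<in>UNIV. \<bar>real_of_int (l j)\<bar>) \<le> M1 * (\<Sum>j\<in>-I. \<bar>real_of_int (l j)\<bar>)"
proof -
  define f :: "real^'n \<Rightarrow> (real^'d) \<times> (real^'n)" where
    "f x = ((\<chi> i. \<Sum>j\<in>UNIV. x$j * real_of_int (v j i)), (\<chi> j. if j \<in> I then 0 else x$j))" for x
  have lin: "linear f"
    by (rule linearI) (simp_all add: f_def vec_eq_iff sum.distrib algebra_simps sum_distrib_left)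
  have inj: "inj f"
    unfolding linear_injective_0[OF lin]
  proof (intro allI impI)
    fix x assume fx: "f x = 0"
    have out: "x$j = 0" if "j \<notin> I" for j
    proof -
      have "snd (f x) $ j = 0" using fx by simp
      thus ?thesis using that by (simp add: f_def)
    qed
    have s: "(\<Sum>j\<in>UNIV. x$j * real_of_int (v j i)) = 0" for i
    proof -
      have "fst (f x) $ i = 0" using fx by simp
      thus ?thesis by (simp add: f_def)
    qed
    have "\<forall>j. x$j = 0"
      using li unfolding lin_indep_on_def
      by (rule allE[of _ "\<lambda>j. x$j"]) (use out s in auto)
    thus "x = 0" by (simp add: vec_eq_iff)
  qed
  obtain B where B: "B > 0" "\<And>x. B * norm x \<le> norm (f x)"
    using linear_inj_bounded_below_pos[OF lin inj] by blast
  show ?thesis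
  proof (rule that[of "real CARD('n) / B"])
    show "real CARD('n) / B \<ge> 0" using B by simp
    fix l assume l: "l \<in> Lat v"
    define x :: "real^'n" where "x = (\<chi> j. real_of_int (l j))"
    have "f x = (0, (\<chi> j. if j \<in> I then 0 else real_of_int (l j)))"
      using l by (simp add: f_def x_def Lat_def vec_eq_iff flip: of_int_mult of_int_sum)
    hence "norm (f x) = norm (\<chi> j. if j \<in> I then 0 else real_of_int (l j))" by simp
    also have "\<dots> \<le> (\<Sum>j\<in>UNIV. \<bar>(\<chi> j. if j \<in> I then 0 else real_of_int (l j))$j\<bar>)" by (rule norm_le_l1_cart)
    also have "\<dots> = (\<Sum>j\<in>-I. \<bar>real_of_int (l j)\<bar>)"
      by (simp add: if_distrib sum.If_cases Compl_eq_Diff_UNIV)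
    finally have fx: "norm (f x) \<le> (\<Sum>j\<in>-I. \<bar>real_of_int (l j)\<bar>)" .
    have "(\<Sum>j\<in>UNIV. \<bar>real_of_int (l j)\<bar>) \<le> (\<Sum>j\<in>(UNIV::'n set). norm x)"
      by (rule sum_mono) (metis component_le_norm_cart vec_lambda_beta x_def)
    also have "\<dots> = real CARD('n) * norm x" by simp
    also have "\<dots> \<le> real CARD('n) * (norm (f x) / B)"
      using B by (intro mult_left_mono) (auto simp: field_simps)
    also have "\<dots> \<le> real CARD('n) * ((\<Sum>j\<in>-I. \<bar>real_of_int (l j)\<bar>) / B)"
      using B fx by (intro mult_left_mono divide_right_mono) auto
    finally show "(\<Sum>j\<in>UNIV. \<bar>real_of_int (l j)\<bar>) \<le> real CARD('n) / B * (\<Sum>j\<in>-I. \<bar>real_of_int (l j)\<bar>)"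
      by simp
  qed
qed

lemma fact_mult_le_real: "(fact a :: real) * fact b \<le> fact (a + b)"
proof -
  have "real (fact a * fact (a + b - a) * ((a + b) choose a)) = real (fact (a + b))"
    using binomial_fact_lemma[of a "a + b"] by (simp only:)
  hence e: "fact a * fact b * real ((a + b) choose a) = fact (a + b)" by (simp only: of_nat_mult of_nat_fact add_diff_cancel_left')
  have "0 < (a + b) choose a" by (rule zero_less_binomial) simp
  hence "1 \<le> real ((a + b) choose a)" by linarith
  hence "fact a * fact b * 1 \<le> fact a * fact b * real ((a + b) choose a)"
    by (intro mult_left_mono) auto
  thus ?thesis using e by simp
qed

lemma prod_fact_le:
  assumes "finite J"
  shows "(\<Prod>j\<in>J. fact (b j) :: real) \<le> fact (\<Sum>j\<in>J. b j)"
  using assms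
proof (induction J rule: finite_induct)
  case empty then show ?case by simp
next
  case (insert x J)
  have "(\<Prod>j\<in>insert x J. fact (b j) :: real) = fact (b x) * (\<Prod>j\<in>J. fact (b j))" using insert by simp
  also have "\<dots> \<le> fact (b x) * fact (\<Sum>j\<in>J. b j)" by (rule mult_left_mono[OF insert.IH]) simp
  also have "\<dots> \<le> fact (b x + (\<Sum>j\<in>J. b j))" by (rule fact_mult_le_real)
  finally show ?case using insert by simp
qed

lemma fact_sum_le:
  assumes "finite J"
  shows "(fact (\<Sum>j\<in>J. a j) :: real) \<le> 2 ^ (card J * (\<Sum>j\<in>J. a j)) * (\<Prod>j\<in>J. fact (a j))"
  using assms
proof (induction J rule: finite_induct)
  case empty then show ?case by simp
next
  case (insert x J)
  define S where "S = (\<Sum>j\<in>J. a j)"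
  define k where "k = card J"
  have "(fact (\<Sum>j\<in>insert x J. a j) :: real) = fact (a x + S)" using insert by (simp add: S_def)
  also have "\<dots> \<le> 2 ^ (a x + S) * fact (a x) * fact S"
    using fact_split_le[of "a x" "a x + S"] by simp
  also have "\<dots> \<le> 2 ^ (a x + S) * fact (a x) * (2 ^ (k * S) * (\<Prod>j\<in>J. fact (a j)))"
    by (rule mult_left_mono) (use insert.IH in \<open>auto simp: S_def k_def\<close>)
  also have "\<dots> = 2 ^ (a x + S + k * S) * (fact (a x) * (\<Prod>j\<in>J. fact (a j)))"
    by (simp add: power_add mult_ac)
  also have "\<dots> \<le> 2 ^ ((k + 1) * (a x + S)) * (fact (a x) * (\<Prod>j\<in>J. fact (a j)))"
    by (rule mult_right_mono[OF power_increasing]) (auto simp: algebra_simps intro!: prod_nonneg mult_nonneg_nonneg)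
  finally show ?case using insert by (simp add: S_def k_def)
qed

lemma prod_Fr_le:
  fixes l :: "'n::finite \<Rightarrow> int"
  assumes "(\<Sum>j\<in>UNIV. l j) = 0"
  shows "(\<Prod>j\<in>UNIV. Fr (l j)) \<le> 2 ^ (CARD('n) * (\<Sum>j\<in>UNIV. nat \<bar>l j\<bar>))"
proof -
  define a where "a j = nat (l j)" for j
  define b where "b j = nat (- l j)" for j
  have lab: "l j = int (a j) - int (b j)" for j by (simp add: a_def b_def)
  have "int (\<Sum>j\<in>UNIV. a j) - int (\<Sum>j\<in>UNIV. b j) = 0"
    using assms by (simp add: lab sum_subtractf)
  hence "int (\<Sum>j\<in>UNIV. a j) = int (\<Sum>j\<in>UNIV. b j)" by linarith
  hence ab: "(\<Sum>j\<in>UNIV. a j) = (\<Sum>j\<in>UNIV. b j)" by (simp only: of_nat_eq_iff)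
  have "(\<Prod>j\<in>UNIV. Fr (l j)) = (\<Prod>j\<in>UNIV. fact (b j)) / (\<Prod>j\<in>UNIV. fact (a j))"
    by (simp add: Fr_def a_def b_def prod_dividef)
  also have "\<dots> \<le> fact (\<Sum>j\<in>UNIV. a j) / (\<Prod>j\<in>UNIV. fact (a j))"
    using prod_fact_le[of UNIV b] ab by (intro divide_right_mono) (auto intro: prod_nonneg)
  also have "\<dots> \<le> 2 ^ (CARD('n) * (\<Sum>j\<in>UNIV. a j))"
  proof -
    have p: "(\<Prod>j\<in>UNIV. fact (a j) :: real) > 0" by (intro prod_pos) auto
    show ?thesis using fact_sum_le[of UNIV a] p by (simp add: divide_le_eq)
  qed
  also have "\<dots> \<le> 2 ^ (CARD('n) * (\<Sum>j\<in>UNIV. nat \<bar>l j\<bar>))"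
    by (intro power_increasing mult_left_mono sum_mono) (auto simp: a_def)
  finally show ?thesis .
qed

lemma exp_sum_summable:
  "(\<lambda>x::'n::finite \<Rightarrow> nat. exp (- real (\<Sum>j\<in>UNIV. x j))) summable_on UNIV"
proof (rule nonneg_bdd_above_summable_on)
  define q :: real where "q = exp (-1)"
  have q: "0 < q" "q < 1" by (auto simp: q_def)
  define G where "G = 1 / (1 - q)"
  show "bdd_above (sum (\<lambda>x::'n \<Rightarrow> nat. exp (- real (\<Sum>j\<in>UNIV. x j))) ` {F. F \<subseteq> UNIV \<and> finite F})"
  proof (rule bdd_aboveI2)
    fix P :: "('n \<Rightarrow> nat) set" assume "P \<in> {F. F \<subseteq> UNIV \<and> finite F}"
    hence P: "finite P" by simp
    define N where "N = (\<Sum>x\<in>P. \<Sum>j\<in>UNIV. x j)"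
    have sub: "P \<subseteq> PiE UNIV (\<lambda>_. {..<Suc N})"
    proof
      fix x assume x: "x \<in> P"
      have "x j \<le> N" for j
      proof -
        have "x j \<le> (\<Sum>j\<in>UNIV. x j)" by (rule member_le_sum) auto
        also have "\<dots> \<le> N" unfolding N_def by (rule member_le_sum[OF x _ P]) simp
        finally show ?thesis .
      qed
      thus "x \<in> PiE UNIV (\<lambda>_. {..<Suc N})" by (auto simp: PiE_def extensional_def less_Suc_eq_le)
    qed
    have e: "exp (- real (\<Sum>j\<in>UNIV. x j)) = (\<Prod>j\<in>UNIV. q ^ x j)" for x :: "'n \<Rightarrow> nat"
    proof -
      have "exp (- real (\<Sum>j\<in>UNIV. x j)) = exp (\<Sum>j\<in>UNIV. - real (x j))" by (simp add: sum_negf)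
      also have "\<dots> = (\<Prod>j\<in>UNIV. exp (- real (x j)))" by (rule exp_sum) simp
      also have "\<dots> = (\<Prod>j\<in>UNIV. q ^ x j)"
        by (rule prod.cong[OF refl]) (simp add: q_def flip: exp_of_nat_mult)
      finally show ?thesis .
    qed
    have "(\<Sum>x\<in>P. exp (- real (\<Sum>j\<in>UNIV. x j))) \<le> (\<Sum>x\<in>PiE (UNIV::'n set) (\<lambda>_. {..<Suc N}). exp (- real (\<Sum>j\<in>UNIV. x j)))"
    proof (rule sum_mono2[OF _ sub])
      show "finite (PiE (UNIV::'n set) (\<lambda>_. {..<Suc N}))" by (rule finite_PiE) auto
    qed simp
    also have "\<dots> = (\<Sum>x\<in>PiE (UNIV::'n set) (\<lambda>_. {..<Suc N}). \<Prod>j\<in>UNIV. q ^ x j)" by (rule sum.cong[OF refl], rule e)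
    also have "\<dots> = (\<Prod>j\<in>(UNIV::'n set). \<Sum>i\<in>{..<Suc N}. q ^ i)"
      by (rule prod_sum_PiE[symmetric]) auto
    also have "\<dots> \<le> (\<Prod>j\<in>(UNIV::'n set). G)"
    proof (rule prod_mono)
      fix j :: 'n
      have "(\<Sum>i\<in>{..<Suc N}. q ^ i) = (if q = 1 then of_nat (Suc N) else (1 - q ^ Suc N) / (1 - q))"
        by (rule sum_gp_strict)
      also have "\<dots> = (1 - q ^ Suc N) / (1 - q)" using q by simp
      also have "\<dots> \<le> 1 / (1 - q)" using q by (intro divide_right_mono) auto
      finally have le: "(\<Sum>i\<in>{..<Suc N}. q ^ i) \<le> G" unfolding G_def .
      have nn: "0 \<le> (\<Sum>i\<in>{..<Suc N}. q ^ i)" by (rule sum_nonneg) (use q in auto)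
      show "0 \<le> (\<Sum>i\<in>{..<Suc N}. q ^ i) \<and> (\<Sum>i\<in>{..<Suc N}. q ^ i) \<le> G"
        by (rule conjI[OF nn le])
    qed
    finally show "(\<Sum>x\<in>P. exp (- real (\<Sum>j\<in>UNIV. x j))) \<le> G ^ CARD('n)" by simp
  qed
qed simp

lemma LatR_Lat: "l \<in> Lat v \<Longrightarrow> (\<lambda>j. real_of_int (l j)) \<in> LatR v"
  unfolding LatR_def by (rule CollectI, rule exI[of _ "{l}"], rule exI[of _ "\<lambda>_. 1"]) auto

lemma Ccone_Lat_iff:
  "l \<in> Lat v \<Longrightarrow> (\<lambda>j. real_of_int (l j)) \<in> Ccone v I \<longleftrightarrow> (\<forall>j. j \<notin> I \<longrightarrow> l j \<ge> 0)"
  using LatR_Lat[of l v] by (auto simp: Ccone_def)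

lemma inj_proj:
  fixes v :: "'n::finite \<Rightarrow> 'd::finite \<Rightarrow> int"
  assumes li: "lin_indep_on v I"
  shows "inj_on (\<lambda>l. (\<lambda>j. if j \<in> I then 0 else nat (l j))) (Lat v \<inter> {l. \<forall>j. j \<notin> I \<longrightarrow> l j \<ge> 0})"
proof (rule inj_onI)
  fix l l' assume l: "l \<in> Lat v \<inter> {l. \<forall>j. j \<notin> I \<longrightarrow> l j \<ge> 0}" and l': "l' \<in> Lat v \<inter> {l. \<forall>j. j \<notin> I \<longrightarrow> l j \<ge> 0}"
    and eq: "(\<lambda>j. if j \<in> I then 0 else nat (l j)) = (\<lambda>j. if j \<in> I then 0 else nat (l' j))"
  have out: "l j = l' j" if "j \<notin> I" for j
  proof -
    have "nat (l j) = nat (l' j)" using fun_cong[OF eq, of j] that by simp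
    moreover have "l j \<ge> 0" "l' j \<ge> 0" using l l' that by auto
    ultimately show ?thesis by (simp add: eq_nat_nat_iff)
  qed
  define c where "c j = real_of_int (l j) - real_of_int (l' j)" for j
  have "\<forall>j. c j = 0"
  proof -
    have imp: "(\<forall>j. j \<notin> I \<longrightarrow> c j = 0) \<and> (\<forall>i. (\<Sum>j\<in>UNIV. c j * real_of_int (v j i)) = 0) \<longrightarrow> (\<forall>j. c j = 0)"
      using li unfolding lin_indep_on_def by blast
    have s: "(\<Sum>j\<in>UNIV. c j * real_of_int (v j i)) = 0" for i
    proof -
      have li1: "(\<Sum>j\<in>UNIV. l j * v j i) = 0" "(\<Sum>j\<in>UNIV. l' j * v j i) = 0"
        using l l' by (auto simp: Lat_def)
      have "(\<Sum>j\<in>UNIV. c j * real_of_int (v j i)) =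
            real_of_int (\<Sum>j\<in>UNIV. l j * v j i) - real_of_int (\<Sum>j\<in>UNIV. l' j * v j i)"
        by (simp add: c_def algebra_simps sum_subtractf)
      also have "\<dots> = 0" by (simp only: li1 of_int_0 diff_self)
      finally show ?thesis .
    qed
    show "\<forall>j. c j = 0" using imp s out by (auto simp: c_def)
  qed
  thus "l = l'" by (auto simp: c_def fun_eq_iff)
qed



lemma pow2_exp: "(2::real) ^ k = exp (real k * ln 2)"
  by (simp add: exp_of_nat_mult)

lemma M_bound:
  fixes v :: "'n::finite \<Rightarrow> 'd::finite \<Rightarrow> int" and z0 :: "'n \<Rightarrow> complex" and CC uu :: "'n \<Rightarrow> real"
  assumes h1: "has_height_one v"
    and M1: "\<And>l. l \<in> Lat v \<Longrightarrow> (\<Sum>j\<in>UNIV. \<bar>real_of_int (l j)\<bar>) \<le> M1 * (\<Sum>j\<in>-I. \<bar>real_of_int (l j)\<bar>)"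
    and M1pos: "M1 \<ge> 0"
    and Kdef: "K = M1 * (1 + (real CARD('n) + 1) * ln 2) + 1"
    and uu: "uu \<in> dual_cone (Ccone v I)"
    and lnz: "\<And>j. - ln (norm (z0 j)) = uu j + (if j \<in> I then 0 else K)"
    and CC: "\<And>j. CC j > 0"
    and l: "l \<in> Lat v" "(\<lambda>j. real_of_int (l j)) \<in> Ccone v I"
  shows "(\<Prod>j\<in>UNIV. CC j * exp (real_of_int (l j) * ln (norm (z0 j)) + real_of_int \<bar>l j\<bar>) * 2 ^ nat \<bar>l j\<bar> * Fr (l j))
         \<le> (\<Prod>j\<in>UNIV. CC j) * exp (- (\<Sum>j\<in>-I. real_of_int (l j)))"
proof -
  define a where "a j = real_of_int (l j) * ln (norm (z0 j)) + real_of_int \<bar>l j\<bar>" for j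
  define S where "S = (\<Sum>j\<in>UNIV. nat \<bar>l j\<bar>)"
  define P where "P = (\<Sum>j\<in>UNIV. \<bar>real_of_int (l j)\<bar>)"
  define T where "T = (\<Sum>j\<in>-I. real_of_int (l j))"
  define n where "n = CARD('n)"
  have lnn: "l j \<ge> 0" if "j \<notin> I" for j using l Ccone_Lat_iff[of l v I] that by auto
  have SP: "real S = P" by (simp add: S_def P_def)
  have T0: "T \<ge> 0" unfolding T_def by (rule sum_nonneg) (use lnn in auto)
  have PT: "P \<le> M1 * T"
  proof -
    have "(\<Sum>j\<in>-I. \<bar>real_of_int (l j)\<bar>) = T" unfolding T_def by (rule sum.cong) (use lnn in auto)
    thus ?thesis using M1[OF l(1)] by (simp add: P_def)
  qed
  have Fr_le: "(\<Prod>j\<in>UNIV. Fr (l j)) \<le> 2 ^ (n * S)"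
    unfolding n_def S_def by (rule prod_Fr_le[OF Lat_sum_zero[OF h1 l(1)]])
  have prod_eq: "(\<Prod>j\<in>UNIV. CC j * exp (a j) * 2 ^ nat \<bar>l j\<bar> * Fr (l j)) =
      (\<Prod>j\<in>UNIV. CC j) * exp (\<Sum>j\<in>UNIV. a j) * 2 ^ S * (\<Prod>j\<in>UNIV. Fr (l j))"
    by (simp add: prod.distrib exp_sum power_sum S_def)
  have dual: "(\<Sum>j\<in>UNIV. uu j * real_of_int (l j)) \<ge> 0"
    using uu l(2) unfolding dual_cone_def by auto
  have cs: "(\<Sum>j\<in>UNIV. (if j \<in> I then 0 else K) * real_of_int (l j)) = K * T"
  proof -
    have "(\<Sum>j\<in>UNIV. (if j \<in> I then 0 else K) * real_of_int (l j)) = (\<Sum>j\<in>UNIV. if j \<in> -I then K * real_of_int (l j) else 0)"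
      by (rule sum.cong) auto
    also have "\<dots> = (\<Sum>j\<in>-I. K * real_of_int (l j))" by (rule sum.mono_neutral_cong_right) auto
    finally show ?thesis by (simp add: T_def sum_distrib_left)
  qed
  have suma: "(\<Sum>j\<in>UNIV. a j) \<le> - K * T + P"
  proof -
    have "(\<Sum>j\<in>UNIV. a j) = (\<Sum>j\<in>UNIV. real_of_int (l j) * ln (norm (z0 j))) + P"
      by (simp add: a_def P_def sum.distrib)
    also have "(\<Sum>j\<in>UNIV. real_of_int (l j) * ln (norm (z0 j))) =
               - (\<Sum>j\<in>UNIV. uu j * real_of_int (l j)) - (\<Sum>j\<in>UNIV. (if j \<in> I then 0 else K) * real_of_int (l j))"
    proof -
      have "real_of_int (l j) * ln (norm (z0 j)) = - (uu j * real_of_int (l j)) - (if j \<in> I then 0 else K) * real_of_int (l j)" for j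
      proof -
        have e: "ln (norm (z0 j)) = - (uu j + (if j \<in> I then 0 else K))" using lnz[of j] by linarith
        show ?thesis unfolding e by (simp add: algebra_simps)
      qed
      hence "(\<Sum>j\<in>UNIV. real_of_int (l j) * ln (norm (z0 j))) =
             (\<Sum>j\<in>UNIV. - (uu j * real_of_int (l j)) - (if j \<in> I then 0 else K) * real_of_int (l j))" by simp
      thus ?thesis by (simp add: sum_subtractf sum_negf)
    qed
    finally show ?thesis using dual cs by linarith
  qed
  have "(\<Prod>j\<in>UNIV. CC j * exp (a j) * 2 ^ nat \<bar>l j\<bar> * Fr (l j)) \<le>
        (\<Prod>j\<in>UNIV. CC j) * exp (\<Sum>j\<in>UNIV. a j) * 2 ^ S * 2 ^ (n * S)"
  proof -
    have pc: "0 < (\<Prod>j\<in>UNIV. CC j)" by (rule prod_pos) (use CC in auto)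
    show ?thesis unfolding prod_eq using pc by (intro mult_left_mono Fr_le) simp
  qed
  also have "\<dots> = (\<Prod>j\<in>UNIV. CC j) * exp ((\<Sum>j\<in>UNIV. a j) + real ((n + 1) * S) * ln 2)"
  proof -
    have "(2::real) ^ S * 2 ^ (n * S) = 2 ^ ((n + 1) * S)" by (simp add: power_add algebra_simps)
    also have "\<dots> = exp (real ((n + 1) * S) * ln 2)" by (rule pow2_exp)
    finally have e: "(2::real) ^ S * 2 ^ (n * S) = exp (real ((n + 1) * S) * ln 2)" .
    show ?thesis by (simp only: mult.assoc e exp_add)
  qed
  also have "\<dots> \<le> (\<Prod>j\<in>UNIV. CC j) * exp (- T)"
  proof (intro mult_left_mono exp_mono)
    have "real ((n + 1) * S) * ln 2 = (real n + 1) * ln 2 * P" by (simp add: SP[symmetric] algebra_simps)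
    hence "(\<Sum>j\<in>UNIV. a j) + real ((n + 1) * S) * ln 2 \<le> - K * T + P * (1 + (real n + 1) * ln 2)"
      using suma by (simp add: algebra_simps)
    also have "\<dots> \<le> - K * T + M1 * T * (1 + (real n + 1) * ln 2)"
      by (intro add_left_mono mult_right_mono PT) (auto intro: add_nonneg_nonneg)
    also have "\<dots> = - T" by (simp add: Kdef n_def algebra_simps)
    finally show "(\<Sum>j\<in>UNIV. a j) + real ((n + 1) * S) * ln 2 \<le> - T" .
  qed (use CC in \<open>auto intro: prod_nonneg less_imp_le\<close>)
  finally show ?thesis by (simp add: a_def T_def)
qed



lemma local_rep:
  fixes v :: "'n::finite \<Rightarrow> 'd::finite \<Rightarrow> int" and z0 lam0 :: "'n \<Rightarrow> complex"
  assumes h1: "has_height_one v" and li: "lin_indep_on v I"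
    and M1: "\<And>l. l \<in> Lat v \<Longrightarrow> (\<Sum>j\<in>UNIV. \<bar>real_of_int (l j)\<bar>) \<le> M1 * (\<Sum>j\<in>-I. \<bar>real_of_int (l j)\<bar>)"
    and M1pos: "M1 \<ge> 0"
    and Kdef: "K = M1 * (1 + (real CARD('n) + 1) * ln 2) + 1"
    and z0: "z0 \<in> Uset v I (\<lambda>j. if j \<in> I then 0 else K)"
  shows "\<exists>r>0. \<exists>M. M summable_on (Lat v \<inter> {l. (\<lambda>j. real_of_int (l j)) \<in> Ccone v I}) \<and>
           (\<forall>l. hasrep r (\<lambda>w u. series_term (\<lambda>j. z0 j + w j) (\<lambda>j. lam0 j + u j) l) (M l))"
proof -
  define L' where "L' = Lat v \<inter> {l. (\<lambda>j. real_of_int (l j)) \<in> Ccone v I}"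
  have nz: "\<And>j. z0 j \<noteq> 0" and arg: "\<And>j. Arg (z0 j) < pi" using z0 by (auto simp: Uset_def)
  obtain uu where uu: "uu \<in> dual_cone (Ccone v I)"
    and eqln: "(\<lambda>j. - ln (norm (z0 j))) = (\<lambda>j. uu j + (if j \<in> I then 0 else K))"
    using z0 by (auto simp: Uset_def)
  have lnz: "- ln (norm (z0 j)) = uu j + (if j \<in> I then 0 else K)" for j using fun_cong[OF eqln, of j] by simp
  define F where "F j m = (\<lambda>(w::'n \<Rightarrow> complex) u.
        zpow (z0 j + w j) (of_int m + (lam0 j + u j)) / Gamma (of_int m + (lam0 j + u j) + 1))" for j m
  define B where "B C j m = C * exp (real_of_int m * ln (norm (z0 j)) + real_of_int \<bar>m\<bar>) * 2 ^ nat \<bar>m\<bar> * Fr m"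
    for C j and m :: int
  have "\<forall>j. \<exists>R C. 0 < R \<and> 0 < C \<and> (\<forall>r m. 0 < r \<longrightarrow> 2 * r < R \<longrightarrow> hasrep r (F j m) (B C j m))"
  proof
    fix j
    obtain R C where "0 < R" "R \<le> 1" "0 < C" "R \<le> norm (z0 j) / 2"
      "\<And>r m. 0 < r \<Longrightarrow> 2 * r < R \<Longrightarrow> hasrep r (\<lambda>(w::'n \<Rightarrow> complex) u.
        zpow (z0 j + w j) (of_int m + (lam0 j + u j)) / Gamma (of_int m + (lam0 j + u j) + 1))
        (C * exp (real_of_int m * ln (norm (z0 j)) + real_of_int \<bar>m\<bar>) * 2 ^ nat \<bar>m\<bar> * Fr m)"
      using factor_rep[OF nz arg, where ?lam0.0 = "lam0 j" and j = j] by blast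
    thus "\<exists>R C. 0 < R \<and> 0 < C \<and> (\<forall>r m. 0 < r \<longrightarrow> 2 * r < R \<longrightarrow> hasrep r (F j m) (B C j m))"
      unfolding F_def B_def by blast
  qed
  then obtain RR where "\<forall>j. \<exists>C. 0 < RR j \<and> 0 < C \<and> (\<forall>r m. 0 < r \<longrightarrow> 2 * r < RR j \<longrightarrow> hasrep r (F j m) (B C j m))"
    by (metis choice)
  then obtain CC where RC: "\<And>j. 0 < RR j" "\<And>j. 0 < CC j"
    "\<And>j r m. 0 < r \<Longrightarrow> 2 * r < RR j \<Longrightarrow> hasrep r (F j m) (B (CC j) j m)"
    by (metis choice)
  define r where "r = Min (range RR) / 3"
  have Minpos: "0 < Min (range RR)" by (subst Min_gr_iff) (use RC in auto)
  have r0: "0 < r" using Minpos by (simp add: r_def)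
  have r2: "2 * r < RR j" for j
  proof -
    have "Min (range RR) \<le> RR j" by (rule Min_le) auto
    thus ?thesis using RC(1)[of j] unfolding r_def by linarith
  qed
  define M where "M l = (\<Prod>j\<in>UNIV. B (CC j) j (l j))" for l :: "'n \<Rightarrow> int"
  have H: "hasrep r (\<lambda>w u. series_term (\<lambda>j. z0 j + w j) (\<lambda>j. lam0 j + u j) l) (M l)" for l
  proof -
    have "hasrep r (\<lambda>w u. \<Prod>j\<in>UNIV. F j (l j) w u) (\<Prod>j\<in>UNIV. B (CC j) j (l j))"
      by (rule hasrep_prod) (use RC(3)[OF r0 r2] r0 in auto)
    thus ?thesis by (simp add: M_def F_def series_term_def)
  qed
  have M0: "0 \<le> M l" for l
    unfolding M_def B_def using RC(2) by (intro prod_nonneg mult_nonneg_nonneg) (auto simp: Fr_def less_imp_le)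
  define T where "T l = (\<Sum>j\<in>-I. real_of_int (l j))" for l :: "'n \<Rightarrow> int"
  have Mle: "M l \<le> (\<Prod>j\<in>UNIV. CC j) * exp (- T l)" if "l \<in> L'" for l
    unfolding M_def B_def T_def
    by (rule M_bound[OF h1 M1 M1pos Kdef uu lnz RC(2)]) (use that in \<open>auto simp: L'_def\<close>)
  define \<phi> where "\<phi> l = (\<lambda>j. if j \<in> I then 0 else nat (l j))" for l :: "'n \<Rightarrow> int"
  define g where "g x = exp (- real (\<Sum>j\<in>UNIV. x j))" for x :: "'n \<Rightarrow> nat"
  have L'eq: "L' = Lat v \<inter> {l. \<forall>j. j \<notin> I \<longrightarrow> l j \<ge> 0}"
    unfolding L'_def using Ccone_Lat_iff[of _ v I] by blast
  have inj: "inj_on \<phi> L'" unfolding L'eq \<phi>_def by (rule inj_proj[OF li])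
  have "g summable_on \<phi> ` L'"
    unfolding g_def by (rule summable_on_subset_banach[OF exp_sum_summable]) simp
  hence "(g \<circ> \<phi>) summable_on L'" using summable_on_reindex[OF inj] by blast
  moreover have "(g \<circ> \<phi>) l = exp (- T l)" if "l \<in> L'" for l
  proof -
    have nn: "l j \<ge> 0" if "j \<notin> I" for j using \<open>l \<in> L'\<close> that by (auto simp: L'eq)
    have "real (\<Sum>j\<in>UNIV. \<phi> l j) = (\<Sum>j\<in>UNIV. if j \<in> I then 0 else real_of_int (l j))"
      unfolding of_nat_sum by (rule sum.cong) (use nn in \<open>auto simp: \<phi>_def\<close>)
    also have "\<dots> = T l" unfolding T_def by (rule sum.mono_neutral_cong_right) auto
    finally show ?thesis by (simp add: g_def)
  qed
  ultimately have "(\<lambda>l. exp (- T l)) summable_on L'" by (rule summable_on_cong[THEN iffD1, rotated]) 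
  hence "(\<lambda>l. (\<Prod>j\<in>UNIV. CC j) * exp (- T l)) summable_on L'" by (rule summable_on_cmult_right)
  hence Ms: "M summable_on L'" by (rule summable_on_comparison_test) (use Mle M0 in auto)
  show ?thesis using r0 Ms H unfolding L'_def by blast
qed

theorem proposition2p8:
  fixes v :: "'n::finite \<Rightarrow> 'd::finite \<Rightarrow> int"
    and \<omega> :: "'n \<Rightarrow> real"
    and I :: "'n set"
  assumes "inj v"
    and "generates_lattice v"
    and "has_height_one v"
    and "regular_triangulation v \<omega>"
    and "maximal_cell v \<omega> I"
  shows "\<exists>c \<in> dual_cone (Ccone v I).
           (\<forall>z \<in> Uset v I c. \<forall>lam. ((\<lambda>l. norm (series_term z lam l)) summable_on (Lat v \<inter> {l. (\<lambda>j. real_of_int (l j)) \<in> Ccone v I}))) \<and>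
           analytic2_on (Uset v I c \<times> UNIV)
             (\<lambda>z lam. \<Sum>\<^sub>\<infinity>l \<in> Lat v \<inter> {l. (\<lambda>j. real_of_int (l j)) \<in> Ccone v I}. series_term z lam l)"
proof -
  have li: "lin_indep_on v I"
    using assms(4,5) unfolding regular_triangulation_def maximal_cell_def by blast
  obtain M1 where M1: "M1 \<ge> 0" "\<And>l. l \<in> Lat v \<Longrightarrow>
     (\<Sum>j\<in>UNIV. \<bar>real_of_int (l j)\<bar>) \<le> M1 * (\<Sum>j\<in>-I. \<bar>real_of_int (l j)\<bar>)"
    using Lat_bound[OF li] by blast
  define K where "K = M1 * (1 + (real CARD('n) + 1) * ln 2) + 1"
  have K0: "K \<ge> 0" unfolding K_def using M1(1) by (intro add_nonneg_nonneg mult_nonneg_nonneg) auto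
  define c where "c = (\<lambda>j::'n. if j \<in> I then 0 else K)"
  define L' where "L' = Lat v \<inter> {l. (\<lambda>j. real_of_int (l j)) \<in> Ccone v I}"
  have cdual: "c \<in> dual_cone (Ccone v I)"
    unfolding dual_cone_def
  proof (intro CollectI ballI)
    fix x assume x: "x \<in> Ccone v I"
    show "(\<Sum>j\<in>UNIV. c j * x j) \<ge> 0"
      by (rule sum_nonneg) (use x K0 in \<open>auto simp: c_def Ccone_def\<close>)
  qed
  have loc: "\<exists>r>0. \<exists>M. M summable_on (Lat v \<inter> {l. (\<lambda>j. real_of_int (l j)) \<in> Ccone v I}) \<and>
           (\<forall>l. hasrep r (\<lambda>w u. series_term (\<lambda>j. z0 j + w j) (\<lambda>j. lam0 j + u j) l) (M l))"
    if "z0 \<in> Uset v I c" for z0 lam0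
  proof (rule local_rep[where v = v and I = I and ?M1.0 = M1 and K = K])
    show "has_height_one v" by (rule assms(3))
    show "lin_indep_on v I" by (rule li)
    show "\<And>l. l \<in> Lat v \<Longrightarrow> (\<Sum>j\<in>UNIV. \<bar>real_of_int (l j)\<bar>) \<le> M1 * (\<Sum>j\<in>-I. \<bar>real_of_int (l j)\<bar>)"
      by (rule M1(2))
    show "M1 \<ge> 0" by (rule M1(1))
    show "K = M1 * (1 + (real CARD('n) + 1) * ln 2) + 1" by (rule K_def)
    show "z0 \<in> Uset v I (\<lambda>j. if j \<in> I then 0 else K)" using that by (simp add: c_def)
  qed
  show ?thesis
  proof (rule bexI[OF _ cdual], intro conjI ballI allI)
    fix z lam assume z: "z \<in> Uset v I c"
    obtain r M where r: "0 < r" and Ms: "M summable_on L'"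
      and H: "\<And>l. hasrep r (\<lambda>w u. series_term (\<lambda>j. z j + w j) (\<lambda>j. lam j + u j) l) (M l)"
      using loc[OF z, of lam] unfolding L'_def by blast
    have in0: "inpd r (\<lambda>_. 0) (\<lambda>_. 0)" using r by (simp add: inpd_def)
    have "norm (series_term z lam l) \<le> M l" for l
      using hasrep_bound[OF H in0 less_imp_le[OF r]] by simp
    thus "(\<lambda>l. norm (series_term z lam l)) summable_on (Lat v \<inter> {l. (\<lambda>j. real_of_int (l j)) \<in> Ccone v I})"
      unfolding L'_def[symmetric] by (intro summable_on_comparison_test[OF Ms]) auto
  next
    show "analytic2_on (Uset v I c \<times> UNIV)
             (\<lambda>z lam. \<Sum>\<^sub>\<infinity>l \<in> Lat v \<inter> {l. (\<lambda>j. real_of_int (l j)) \<in> Ccone v I}. series_term z lam l)"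
      unfolding analytic2_on_def L'_def[symmetric]
    proof (intro ballI)
      fix p :: "('n \<Rightarrow> complex) \<times> ('n \<Rightarrow> complex)" assume p: "p \<in> Uset v I c \<times> UNIV"
      obtain z0 lam0 :: "'n \<Rightarrow> complex" where p': "p = (z0, lam0)" "z0 \<in> Uset v I c" using p by auto
      obtain r M where r: "0 < r" and Ms: "M summable_on L'"
        and H: "\<And>l. hasrep r (\<lambda>w u. series_term (\<lambda>j. z0 j + w j) (\<lambda>j. lam0 j + u j) l) (M l)"
        using loc[OF p'(2), of lam0] unfolding L'_def by blast
      have HS: "hasrep r (\<lambda>w u. \<Sum>\<^sub>\<infinity>l\<in>L'. series_term (\<lambda>j. z0 j + w j) (\<lambda>j. lam0 j + u j) l) (\<Sum>\<^sub>\<infinity>l\<in>L'. M l)"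
        by (rule hasrep_sum(1)[OF less_imp_le[OF r] H Ms])
      obtain a where a: "\<And>w u. inpd r w u \<Longrightarrow>
        ((\<lambda>(\<alpha>, \<beta>). a \<alpha> \<beta> * (\<Prod>j\<in>UNIV. w j ^ \<alpha> j) * (\<Prod>j\<in>UNIV. u j ^ \<beta> j)) has_sum
          (\<Sum>\<^sub>\<infinity>l\<in>L'. series_term (\<lambda>j. z0 j + w j) (\<lambda>j. lam0 j + u j) l)) UNIV"
        using hasrep_analytic[OF HS r] by blast
      have "\<forall>z lam. (\<forall>j. cmod (z j - z0 j) < r \<and> cmod (lam j - lam0 j) < r) \<longrightarrow>
        ((\<lambda>(\<alpha>, \<beta>). a \<alpha> \<beta> * (\<Prod>j\<in>UNIV. (z j - z0 j) ^ \<alpha> j) * (\<Prod>j\<in>UNIV. (lam j - lam0 j) ^ \<beta> j)) has_sum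
          (\<Sum>\<^sub>\<infinity>l\<in>L'. series_term z lam l)) UNIV"
      proof (intro allI impI)
        fix z lam :: "'n \<Rightarrow> complex"
        assume zl: "\<forall>j. cmod (z j - z0 j) < r \<and> cmod (lam j - lam0 j) < r"
        have "inpd r (\<lambda>j. z j - z0 j) (\<lambda>j. lam j - lam0 j)" using zl by (simp add: inpd_def)
        from a[OF this] show "((\<lambda>(\<alpha>, \<beta>). a \<alpha> \<beta> * (\<Prod>j\<in>UNIV. (z j - z0 j) ^ \<alpha> j) * (\<Prod>j\<in>UNIV. (lam j - lam0 j) ^ \<beta> j)) has_sum
          (\<Sum>\<^sub>\<infinity>l\<in>L'. series_term z lam l)) UNIV" by simp
      qed
      thus "case p of (z0, lam0) \<Rightarrow> \<exists>r>0. \<exists>a. \<forall>z lam. (\<forall>j. cmod (z j - z0 j) < r \<and> cmod (lam j - lam0 j) < r) \<longrightarrow>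
        ((\<lambda>(\<alpha>, \<beta>). a \<alpha> \<beta> * (\<Prod>j\<in>UNIV. (z j - z0 j) ^ \<alpha> j) * (\<Prod>j\<in>UNIV. (lam j - lam0 j) ^ \<beta> j)) has_sum
          (\<Sum>\<^sub>\<infinity>l\<in>L'. series_term z lam l)) UNIV"
        using r unfolding p'(1) by auto
    qed
  qed
qed


end
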